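(* Let $1\le p<\infty$ and let $v=(v_n)_{n\in\mathbb{N}}$ be a sequence of positive numbers with $\sup_{n\in\mathbb{N}}v_{n+1}/v_n<\infty$, so that the forward shift $F(x_1,x_2,x_3,\dots)=(0,x_1,x_2,\dots)$ is a bounded operator on $\ell^p(\mathbb{N},v)$. Then the following are equivalent: (a) $F$ is distributionally chaotic; (b) $F$ is densely distributionally chaotic; (c) there exist finite nonempty subsets $S_k\subset\mathbb{N}$ ($k\in\mathbb{N}$) such that: (i) there exists $A\subseteq\mathbb{N}$ with $\overline{\mathrm{dens}}(A)=1$ such that $\lim_{n\in A}v_n=0$; (ii) there exist $\varepsilon>0$, an increasing sequence $(N_k)$ in $\mathbb{N}$ and nonzero complex numbers $(C_{k,j})_{k\in\mathbb{N},j\in S_k}$ such that for every $k\in\mathbb{N}$ \[\operatorname{card}\Big\{1\le n\le N_k:\ \frac{\sum_{j\in S_k}|C_{k,j}|\,v_{n+j}}{\sum_{j\in S_k}|C_{k,j}|\,v_j}\ge k\Big\}\ge N_k\varepsilon.\]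
   Context: $\ell^p(\mathbb{N},v)=\{(x_n)_{n\in\mathbb{N}}:\sum_{n\ge1}|x_n|^pv_n<\infty\}$ with norm $(\sum_n|x_n|^pv_n)^{1/p}$. For $A\subseteq\mathbb{N}$, $\overline{\mathrm{dens}}(A)=\limsup_{N}\frac{\operatorname{card}(A\cap[1,N])}{N}$, $\underline{\mathrm{dens}}(A)=\liminf_{N}\frac{\operatorname{card}(A\cap[1,N])}{N}$. An operator $T$ on a Banach space $Y$ is distributionally chaotic if there exist an uncountable $\Gamma\subset Y$ and $\varepsilon>0$ such that for every $\delta>0$ and distinct $x,y\in\Gamma$: $\underline{\mathrm{dens}}\{j:\|T^jx-T^jy\|<\varepsilon\}=0$ and $\overline{\mathrm{dens}}\{j:\|T^jx-T^jy\|<\delta\}=1$; densely distributionally chaotic if $\Gamma$ can be chosen dense. *)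

theory Defs
  imports "HOL-Analysis.Analysis"
begin

text \<open>Natural numbers \<open>\<nat> = {1,2,3,...}\<close> are modelled by \<open>nat\<close>; index 0 is unused.
  Sequences are functions \<open>nat \<Rightarrow> complex\<close> with value 0 at index 0.\<close>

definition upper_dens :: "nat set \<Rightarrow> ereal" where
  "upper_dens A = limsup (\<lambda>N. ereal (real (card (A \<inter> {1..N})) / real N))"

definition lower_dens :: "nat set \<Rightarrow> ereal" where
  "lower_dens A = liminf (\<lambda>N. ereal (real (card (A \<inter> {1..N})) / real N))"

definition lp_space :: "real \<Rightarrow> (nat \<Rightarrow> real) \<Rightarrow> (nat \<Rightarrow> complex) set" where
  "lp_space p v = {x. x 0 = 0 \<and> summable (\<lambda>n. cmod (x n) powr p * v n)}"

definition lp_norm :: "real \<Rightarrow> (nat \<Rightarrow> real) \<Rightarrow> (nat \<Rightarrow> complex) \<Rightarrow> real" where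
  "lp_norm p v x = (\<Sum>n. cmod (x n) powr p * v n) powr (1 / p)"

definition fwd_shift :: "(nat \<Rightarrow> complex) \<Rightarrow> (nat \<Rightarrow> complex)" where
  "fwd_shift x = (\<lambda>n. if n \<le> 1 then 0 else x (n - 1))"

definition dc_set :: "((nat \<Rightarrow> complex) \<Rightarrow> (nat \<Rightarrow> complex)) \<Rightarrow> ((nat \<Rightarrow> complex) \<Rightarrow> real)
    \<Rightarrow> (nat \<Rightarrow> complex) set \<Rightarrow> real \<Rightarrow> bool" where
  "dc_set T nrm \<Gamma> \<epsilon> \<longleftrightarrow> uncountable \<Gamma> \<and> \<epsilon> > 0 \<and>
     (\<forall>\<delta>>0. \<forall>x\<in>\<Gamma>. \<forall>y\<in>\<Gamma>. x \<noteq> y \<longrightarrow>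
        lower_dens {j. nrm ((T ^^ j) x - (T ^^ j) y) < \<epsilon>} = 0 \<and>
        upper_dens {j. nrm ((T ^^ j) x - (T ^^ j) y) < \<delta>} = 1)"

definition distr_chaotic :: "(nat \<Rightarrow> complex) set \<Rightarrow> ((nat \<Rightarrow> complex) \<Rightarrow> (nat \<Rightarrow> complex))
    \<Rightarrow> ((nat \<Rightarrow> complex) \<Rightarrow> real) \<Rightarrow> bool" where
  "distr_chaotic Y T nrm \<longleftrightarrow> (\<exists>\<Gamma> \<epsilon>. \<Gamma> \<subseteq> Y \<and> dc_set T nrm \<Gamma> \<epsilon>)"

definition densely_distr_chaotic :: "(nat \<Rightarrow> complex) set \<Rightarrow> ((nat \<Rightarrow> complex) \<Rightarrow> (nat \<Rightarrow> complex))
    \<Rightarrow> ((nat \<Rightarrow> complex) \<Rightarrow> real) \<Rightarrow> bool" where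
  "densely_distr_chaotic Y T nrm \<longleftrightarrow> (\<exists>\<Gamma> \<epsilon>. \<Gamma> \<subseteq> Y \<and> dc_set T nrm \<Gamma> \<epsilon> \<and>
      (\<forall>x\<in>Y. \<forall>e>0. \<exists>y\<in>\<Gamma>. nrm (x - y) < e))"

end

theory Submission
  imports Defs "HOL-Library.Countable" "HOL-Library.Nat_Bijection"
begin

definition phi :: "real \<Rightarrow> (nat \<Rightarrow> real) \<Rightarrow> (nat \<Rightarrow> complex) \<Rightarrow> nat \<Rightarrow> real" where
  "phi p v z j = (\<Sum>m. cmod (z m) powr p * v (m + j))"

lemma fwd_shift_diff: "fwd_shift (x - y) = fwd_shift x - fwd_shift y"
  by (auto simp: fwd_shift_def fun_eq_iff)

lemma fwd_shift_pow_diff: "(fwd_shift ^^ j) (x - y) = (fwd_shift ^^ j) x - (fwd_shift ^^ j) y"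
proof (induction j)
  case 0 show ?case by simp
next
  case (Suc j)
  have "(fwd_shift ^^ Suc j) (x - y) = fwd_shift ((fwd_shift ^^ j) (x - y))" by simp
  also have "\<dots> = fwd_shift ((fwd_shift ^^ j) x - (fwd_shift ^^ j) y)" using Suc by (simp only:)
  also have "\<dots> = (fwd_shift ^^ Suc j) x - (fwd_shift ^^ Suc j) y" by (simp only: fwd_shift_diff funpow.simps comp_def)
  finally show ?case .
qed

lemma fwd_shift_pow: "z 0 = 0 \<Longrightarrow> (fwd_shift ^^ j) z n = (if n \<le> j then 0 else z (n - j))"
proof (induction j arbitrary: n)
  case 0
  then show ?case by auto
next
  case (Suc j)
  show ?case using Suc by (auto simp: fwd_shift_def)
qed

locale wsetup =
  fixes p :: real and v :: "nat \<Rightarrow> real" and M :: real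
  assumes p1: "1 \<le> p"
    and vpos: "\<And>n. n \<ge> 1 \<Longrightarrow> v n > 0"
    and M1: "M \<ge> 1"
    and Mb: "\<And>n. n \<ge> 1 \<Longrightarrow> v (n + 1) \<le> M * v n"
begin

lemma p0: "p > 0" using p1 by auto

lemma v_growth: "n \<ge> 1 \<Longrightarrow> v (n + d) \<le> M ^ d * v n"
proof (induction d)
  case 0
  then show ?case by simp
next
  case (Suc d)
  have "v (n + Suc d) = v ((n + d) + 1)" by simp
  also have "\<dots> \<le> M * v (n + d)" using Mb Suc by auto
  also have "\<dots> \<le> M * (M ^ d * v n)" using Suc M1 by (intro mult_left_mono) auto
  finally show ?case by (simp add: algebra_simps)
qed

lemma v_growth': "n \<ge> 1 \<Longrightarrow> d \<le> e \<Longrightarrow> v (n + d) \<le> M ^ e * v n"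
proof -
  assume a: "n \<ge> 1" "d \<le> e"
  have "v (n + d) \<le> M ^ d * v n" using v_growth a by auto
  also have "\<dots> \<le> M ^ e * v n" using a M1 vpos[of n]
    by (intro mult_right_mono power_increasing) auto
  finally show ?thesis .
qed

lemma term_nonneg: "0 \<le> cmod (z m) powr p * v (m + j)" if "z 0 = 0" for z m j
proof (cases "m = 0")
  case True then show ?thesis using that by simp
next
  case False then show ?thesis using vpos[of "m + j"] by auto
qed

lemma lp_term_nonneg: "z 0 = 0 \<Longrightarrow> 0 \<le> cmod (z m) powr p * v m"
  using term_nonneg[of z m 0] by simp

lemma summable_shifted:
  assumes "z \<in> lp_space p v"
  shows "summable (\<lambda>m. cmod (z m) powr p * v (m + j))"
proof (rule summable_comparison_test)
  show "summable (\<lambda>m. M ^ j * (cmod (z m) powr p * v m))"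
    using assms by (auto simp: lp_space_def intro: summable_mult)
  show "\<exists>N. \<forall>n\<ge>N. norm (cmod (z n) powr p * v (n + j)) \<le> M ^ j * (cmod (z n) powr p * v n)"
  proof (intro exI allI impI)
    fix n :: nat assume "n \<ge> 1"
    have "v (n + j) \<le> M ^ j * v n" using v_growth \<open>n \<ge> 1\<close> by auto
    moreover have "v (n + j) > 0" using vpos \<open>n \<ge> 1\<close> by auto
    then have "norm (cmod (z n) powr p * v (n + j)) = cmod (z n) powr p * v (n + j)" by simp
    also have "\<dots> \<le> cmod (z n) powr p * (M ^ j * v n)"
      using \<open>v (n + j) \<le> M ^ j * v n\<close> by (intro mult_left_mono) auto
    finally show "norm (cmod (z n) powr p * v (n + j)) \<le> M ^ j * (cmod (z n) powr p * v n)"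
      by (simp add: algebra_simps)
  qed
qed

lemma phi_nonneg: "z \<in> lp_space p v \<Longrightarrow> phi p v z j \<ge> 0"
  unfolding phi_def using summable_shifted term_nonneg
  by (intro suminf_nonneg) (auto simp: lp_space_def)

lemma phi_bound_shift: "z \<in> lp_space p v \<Longrightarrow> phi p v z j \<le> M ^ j * phi p v z 0"
proof -
  assume z: "z \<in> lp_space p v"
  have "phi p v z j \<le> (\<Sum>m. M ^ j * (cmod (z m) powr p * v m))"
    unfolding phi_def
  proof (rule suminf_le)
    fix m
    show "cmod (z m) powr p * v (m + j) \<le> M ^ j * (cmod (z m) powr p * v m)"
    proof (cases "m = 0")
      case True then show ?thesis using z by (simp add: lp_space_def)
    next
      case False
      then have "v (m + j) \<le> M ^ j * v m" using v_growth by auto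
      then have "cmod (z m) powr p * v (m + j) \<le> cmod (z m) powr p * (M ^ j * v m)"
        by (intro mult_left_mono) auto
      then show ?thesis by (simp add: algebra_simps)
    qed
    show "summable (\<lambda>m. cmod (z m) powr p * v (m + j))" using summable_shifted z by auto
    show "summable (\<lambda>m. M ^ j * (cmod (z m) powr p * v m))"
      using z by (auto simp: lp_space_def intro: summable_mult)
  qed
  also have "\<dots> = M ^ j * phi p v z 0" unfolding phi_def
    using z by (subst suminf_mult) (auto simp: lp_space_def)
  finally show ?thesis .
qed

lemma shift_in_lp: "z \<in> lp_space p v \<Longrightarrow> (fwd_shift ^^ j) z \<in> lp_space p v"
proof -
  assume z: "z \<in> lp_space p v"
  then have z0: "z 0 = 0" by (simp add: lp_space_def)
  let ?g = "\<lambda>n. cmod ((fwd_shift ^^ j) z n) powr p * v n"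
  have "?g (m + j) = cmod (z m) powr p * v (m + j)" for m
    using z0 by (cases "m = 0") (auto simp: fwd_shift_pow)
  then have "(\<lambda>m. ?g (m + j)) = (\<lambda>m. cmod (z m) powr p * v (m + j))" by (intro ext)
  then have "summable (\<lambda>m. ?g (m + j))" using summable_shifted[OF z] by metis
  then have "summable ?g" by (rule summable_iff_shift[THEN iffD1])
  then show ?thesis using z0 by (simp add: lp_space_def fwd_shift_pow)
qed

lemma lp_norm_shift:
  assumes z: "z \<in> lp_space p v"
  shows "lp_norm p v ((fwd_shift ^^ j) z) = phi p v z j powr (1 / p)"
proof -
  have z0: "z 0 = 0" using z by (simp add: lp_space_def)
  let ?g = "\<lambda>n. cmod ((fwd_shift ^^ j) z n) powr p * v n"
  have g: "?g (m + j) = cmod (z m) powr p * v (m + j)" for m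
    using z0 by (cases "m = 0") (auto simp: fwd_shift_pow)
  have sg: "summable ?g" using shift_in_lp[OF z] by (simp add: lp_space_def)
  have "(\<Sum>m. ?g (m + j)) = (\<Sum>n. ?g n) - (\<Sum>n<j. ?g n)"
    using sg by (rule suminf_minus_initial_segment)
  moreover have "(\<Sum>n<j. ?g n) = 0" using z0 by (auto simp: fwd_shift_pow intro!: sum.neutral)
  ultimately have "(\<Sum>n. ?g n) = phi p v z j" unfolding phi_def using g by simp
  then show ?thesis by (simp add: lp_norm_def)
qed

end


definition dens1 :: "nat set \<Rightarrow> bool" where
  "dens1 A \<longleftrightarrow> (\<forall>\<eta>>0. \<forall>N0. \<exists>N\<ge>N0. N > 0 \<and> real (card (A \<inter> {1..N})) \<ge> (1 - \<eta>) * real N)"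

definition dens0 :: "nat set \<Rightarrow> bool" where
  "dens0 A \<longleftrightarrow> (\<forall>\<eta>>0. \<forall>N0. \<exists>N\<ge>N0. N > 0 \<and> real (card (A \<inter> {1..N})) \<le> \<eta> * real N)"

lemma card_le_N: "card (A \<inter> {1..N}) \<le> N"
proof -
  have "card (A \<inter> {1..N}) \<le> card {1..N}" by (intro card_mono) auto
  then show ?thesis by simp
qed

lemma ratio_le1: "real (card (A \<inter> {1..N})) / real N \<le> 1"
  using card_le_N[of A N] by (cases "N = 0") (auto simp: divide_le_eq)

lemma ratio_ge0: "real (card (A \<inter> {1..N})) / real N \<ge> 0" by simp

lemma upper_dens_le1: "upper_dens A \<le> 1"
  unfolding upper_dens_def
  by (rule Limsup_bounded) (use ratio_le1 in auto)

lemma lower_dens_ge0: "lower_dens A \<ge> 0"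
  unfolding lower_dens_def
  by (rule Liminf_bounded) (use ratio_ge0 in auto)

lemma upper_dens_imp_dens1:
  assumes "upper_dens A = 1" shows "dens1 A"
  unfolding dens1_def
proof (intro allI impI, rule ccontr)
  fix \<eta> :: real and N0 assume e: "\<eta> > 0" and
    c: "\<not> (\<exists>N\<ge>N0. N > 0 \<and> real (card (A \<inter> {1..N})) \<ge> (1 - \<eta>) * real N)"
  have "eventually (\<lambda>N. ereal (real (card (A \<inter> {1..N})) / real N) \<le> ereal (1 - \<eta>)) sequentially"
    unfolding eventually_sequentially
  proof (intro exI[of _ "N0 + 1"] allI impI)
    fix N assume "N \<ge> N0 + 1"
    then have "N \<ge> N0" "N > 0" by auto
    then have "real (card (A \<inter> {1..N})) < (1 - \<eta>) * real N" using c by (meson not_le)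
    then show "ereal (real (card (A \<inter> {1..N})) / real N) \<le> ereal (1 - \<eta>)"
      using \<open>N \<ge> N0 + 1\<close> by (auto simp: divide_le_eq)
  qed
  then have "upper_dens A \<le> ereal (1 - \<eta>)" unfolding upper_dens_def by (rule Limsup_bounded)
  then show False using assms e by auto
qed

lemma dens1_imp_upper_dens:
  assumes "dens1 A" shows "upper_dens A = 1"
proof (rule antisym[OF upper_dens_le1], rule ccontr)
  assume "\<not> 1 \<le> upper_dens A"
  then have lt: "upper_dens A < 1" by auto
  have ge0: "upper_dens A \<ge> 0" unfolding upper_dens_def
    by (rule le_Limsup) (use ratio_ge0 in auto)
  obtain r where r: "upper_dens A = ereal r" using lt ge0 by (cases "upper_dens A") auto
  have r1: "r < 1" using lt r by auto
  have "upper_dens A < ereal ((1 + r) / 2)" using r r1 by auto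
  then have "eventually (\<lambda>N. ereal (real (card (A \<inter> {1..N})) / real N) < ereal ((1 + r) / 2)) sequentially"
    unfolding upper_dens_def by (rule Limsup_lessD)
  then obtain N0 where N0: "\<And>N. N \<ge> N0 \<Longrightarrow> real (card (A \<inter> {1..N})) / real N < (1 + r) / 2"
    unfolding eventually_sequentially by auto
  obtain N where N: "N \<ge> N0" "N > 0" "real (card (A \<inter> {1..N})) \<ge> (1 - (1 - r) / 2) * real N"
    using assms r1 unfolding dens1_def by (meson diff_gt_0_iff_gt half_gt_zero)
  have "real (card (A \<inter> {1..N})) / real N \<ge> (1 - (1 - r) / 2)"
    using N by (auto simp: le_divide_eq)
  then show False using N0[OF N(1)] by (auto simp: field_simps)
qed

lemma lower_dens_imp_dens0:
  assumes "lower_dens A = 0" shows "dens0 A"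
  unfolding dens0_def
proof (intro allI impI, rule ccontr)
  fix \<eta> :: real and N0 assume e: "\<eta> > 0" and
    c: "\<not> (\<exists>N\<ge>N0. N > 0 \<and> real (card (A \<inter> {1..N})) \<le> \<eta> * real N)"
  have "eventually (\<lambda>N. ereal \<eta> \<le> ereal (real (card (A \<inter> {1..N})) / real N)) sequentially"
    unfolding eventually_sequentially
  proof (intro exI[of _ "N0 + 1"] allI impI)
    fix N assume "N \<ge> N0 + 1"
    then have "N \<ge> N0" "N > 0" by auto
    then have "real (card (A \<inter> {1..N})) > \<eta> * real N" using c by (meson not_le)
    then show "ereal \<eta> \<le> ereal (real (card (A \<inter> {1..N})) / real N)"
      using \<open>N \<ge> N0 + 1\<close> by (auto simp: le_divide_eq)
  qed
  then have "ereal \<eta> \<le> lower_dens A" unfolding lower_dens_def by (rule Liminf_bounded)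
  then show False using assms e by auto
qed

lemma dens0_imp_lower_dens:
  assumes "dens0 A" shows "lower_dens A = 0"
proof (rule antisym[OF _ lower_dens_ge0], rule ccontr)
  assume "\<not> lower_dens A \<le> 0"
  then have gt: "lower_dens A > 0" by auto
  have le1: "lower_dens A \<le> 1" unfolding lower_dens_def
    by (rule Liminf_le) (use ratio_le1 in auto)
  obtain r where r: "lower_dens A = ereal r" using gt le1 by (cases "lower_dens A") auto
  have r0: "r > 0" using gt r by auto
  have "ereal (r / 2) < lower_dens A" using r r0 by auto
  then have "eventually (\<lambda>N. ereal (real (card (A \<inter> {1..N})) / real N) > ereal (r / 2)) sequentially"
    unfolding lower_dens_def by (rule less_LiminfD)
  then obtain N0 where N0: "\<And>N. N \<ge> N0 \<Longrightarrow> real (card (A \<inter> {1..N})) / real N > r / 2"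
    unfolding eventually_sequentially by auto
  obtain N where N: "N \<ge> N0" "N > 0" "real (card (A \<inter> {1..N})) \<le> (r / 2) * real N"
    using assms r0 unfolding dens0_def by (meson half_gt_zero)
  have "real (card (A \<inter> {1..N})) / real N \<le> r / 2"
    using N by (auto simp: divide_le_eq)
  then show False using N0[OF N(1)] by auto
qed

lemma dens1_mono: "dens1 A \<Longrightarrow> A \<subseteq> B \<Longrightarrow> dens1 B"
  unfolding dens1_def
proof (intro allI impI)
  fix \<eta> :: real and N0 assume d: "\<forall>\<eta>>0. \<forall>N0. \<exists>N\<ge>N0. N > 0 \<and> real (card (A \<inter> {1..N})) \<ge> (1 - \<eta>) * real N"
    and AB: "A \<subseteq> B" and e: "\<eta> > 0"
  obtain N where N: "N \<ge> N0" "N > 0" "real (card (A \<inter> {1..N})) \<ge> (1 - \<eta>) * real N" using d e by blast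
  have "card (A \<inter> {1..N}) \<le> card (B \<inter> {1..N})" using AB by (intro card_mono) auto
  then show "\<exists>N\<ge>N0. N > 0 \<and> real (card (B \<inter> {1..N})) \<ge> (1 - \<eta>) * real N" using N by force
qed

lemma card_compl_Int: "card ((- S) \<inter> {1..N}) = N - card (S \<inter> {1..N})"
proof -
  have "{1..N} = ((- S) \<inter> {1..N}) \<union> (S \<inter> {1..N})" by auto
  moreover have "((- S) \<inter> {1..N}) \<inter> (S \<inter> {1..N}) = {}" by auto
  ultimately have "card ((- S) \<inter> {1..N}) + card (S \<inter> {1..N}) = N"
    using card_Un_disjoint[of "(- S) \<inter> {1..N}" "S \<inter> {1..N}"] by (metis card_atLeastAtMost diff_Suc_1 finite_Int finite_atLeastAtMost)
  then show ?thesis by auto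
qed

lemma dens0_imp_dens1_compl: "dens0 S \<Longrightarrow> dens1 (- S)"
  unfolding dens0_def dens1_def
proof (intro allI impI)
  fix \<eta> :: real and N0 assume d: "\<forall>\<eta>>0. \<forall>N0. \<exists>N\<ge>N0. N > 0 \<and> real (card (S \<inter> {1..N})) \<le> \<eta> * real N"
    and e: "\<eta> > 0"
  obtain N where N: "N \<ge> N0" "N > 0" "real (card (S \<inter> {1..N})) \<le> \<eta> * real N" using d e by blast
  have "real (card ((- S) \<inter> {1..N})) = real N - real (card (S \<inter> {1..N}))"
    using card_compl_Int[of S N] card_le_N[of S N] by auto
  then show "\<exists>N\<ge>N0. N > 0 \<and> real (card ((- S) \<inter> {1..N})) \<ge> (1 - \<eta>) * real N"
    using N by (intro exI[of _ N]) (auto simp: algebra_simps)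
qed

lemma dens1_disjoint_imp_dens0: "dens1 G \<Longrightarrow> G \<inter> S = {} \<Longrightarrow> dens0 S"
  unfolding dens0_def dens1_def
proof (intro allI impI)
  fix \<eta> :: real and N0 assume d: "\<forall>\<eta>>0. \<forall>N0. \<exists>N\<ge>N0. N > 0 \<and> real (card (G \<inter> {1..N})) \<ge> (1 - \<eta>) * real N"
    and GS: "G \<inter> S = {}" and e: "\<eta> > 0"
  obtain N where N: "N \<ge> N0" "N > 0" "real (card (G \<inter> {1..N})) \<ge> (1 - \<eta>) * real N" using d e by blast
  have "G \<subseteq> - S" using GS by auto
  then have "card (G \<inter> {1..N}) \<le> card ((- S) \<inter> {1..N})" by (intro card_mono) auto
  then have "real (card (G \<inter> {1..N})) \<le> real N - real (card (S \<inter> {1..N}))"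
    using card_compl_Int[of S N] card_le_N[of S N] by auto
  then show "\<exists>N\<ge>N0. N > 0 \<and> real (card (S \<inter> {1..N})) \<le> \<eta> * real N"
    using N by (intro exI[of _ N]) (auto simp: algebra_simps)
qed

lemma card_tail:
  fixes A :: "nat set" and n0 N :: nat
  shows "real (card ({n \<in> A. n \<ge> n0} \<inter> {1..N})) \<ge> real (card (A \<inter> {1..N})) - real n0"
proof -
  have "A \<inter> {1..N} \<subseteq> ({n \<in> A. n \<ge> n0} \<inter> {1..N}) \<union> {1..<n0}" by auto
  then have "card (A \<inter> {1..N}) \<le> card (({n \<in> A. n \<ge> n0} \<inter> {1..N}) \<union> {1..<n0})"
    by (intro card_mono) auto
  also have "\<dots> \<le> card ({n \<in> A. n \<ge> n0} \<inter> {1..N}) + card {1..<n0}" by (rule card_Un_le)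
  also have "\<dots> \<le> card ({n \<in> A. n \<ge> n0} \<inter> {1..N}) + n0" by simp
  finally show ?thesis by linarith
qed

lemma dens1_tail: "dens1 A \<Longrightarrow> dens1 {n \<in> A. n \<ge> n0}"
  unfolding dens1_def
proof (intro allI impI)
  fix \<eta> :: real and N0 assume d: "\<forall>\<eta>>0. \<forall>N0. \<exists>N\<ge>N0. N > 0 \<and> real (card (A \<inter> {1..N})) \<ge> (1 - \<eta>) * real N"
    and e: "\<eta> > 0"
  obtain N where N: "N \<ge> max N0 (nat \<lceil>2 * real n0 / \<eta>\<rceil>)" "N > 0" "real (card (A \<inter> {1..N})) \<ge> (1 - \<eta> / 2) * real N"
    using d e by (meson half_gt_zero)
  have "real N \<ge> 2 * real n0 / \<eta>" using N(1) by linarith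
  then have "real n0 \<le> \<eta> / 2 * real N" using e by (auto simp: field_simps)
  then have "real (card ({n \<in> A. n \<ge> n0} \<inter> {1..N})) \<ge> (1 - \<eta>) * real N"
    using card_tail[of A N n0] N(3) by (auto simp: algebra_simps)
  then show "\<exists>N\<ge>N0. N > 0 \<and> real (card ({n \<in> A. n \<ge> n0} \<inter> {1..N})) \<ge> (1 - \<eta>) * real N"
    using N by (intro exI[of _ N]) auto
qed

lemma dens1_shift: "dens1 A \<Longrightarrow> dens1 ((\<lambda>n. n + m) ` A)"
  unfolding dens1_def
proof (intro allI impI)
  fix \<eta> :: real and N0 assume d: "\<forall>\<eta>>0. \<forall>N0. \<exists>N\<ge>N0. N > 0 \<and> real (card (A \<inter> {1..N})) \<ge> (1 - \<eta>) * real N"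
    and e: "\<eta> > 0"
  obtain N where N: "N \<ge> max N0 (nat \<lceil>2 * real m / \<eta>\<rceil>)" "N > 0" "real (card (A \<inter> {1..N})) \<ge> (1 - \<eta> / 2) * real N"
    using d e by (meson half_gt_zero)
  have "real N \<ge> 2 * real m / \<eta>" using N(1) by linarith
  then have mN: "real m \<le> \<eta> / 2 * real N" using e by (auto simp: field_simps)
  have "(\<lambda>n. n + m) ` (A \<inter> {1..N}) \<subseteq> ((\<lambda>n. n + m) ` A) \<inter> {1..N + m}" by auto
  then have "card ((\<lambda>n. n + m) ` (A \<inter> {1..N})) \<le> card (((\<lambda>n. n + m) ` A) \<inter> {1..N + m})"
    by (intro card_mono) auto
  moreover have "card ((\<lambda>n. n + m) ` (A \<inter> {1..N})) = card (A \<inter> {1..N})"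
    by (intro card_image) (auto simp: inj_on_def)
  ultimately have c: "real (card (((\<lambda>n. n + m) ` A) \<inter> {1..N + m})) \<ge> (1 - \<eta> / 2) * real N"
    using N(3) by linarith
  have "(1 - \<eta>) * real (N + m) \<le> (1 - \<eta> / 2) * real N"
  proof (cases "\<eta> \<le> 1")
    case True
    have "\<eta> * real m \<ge> 0" using e by simp
    then have "(1 - \<eta>) * real m \<le> real m" by (simp add: algebra_simps)
    then show ?thesis using mN by (auto simp: algebra_simps)
  next
    case False
    then have "(1 - \<eta>) * real (N + m) \<le> (1 - \<eta>) * real N" by (intro mult_left_mono_neg) auto
    moreover have "(1 - \<eta> / 2) * real N \<ge> (1 - \<eta>) * real N" using e by (intro mult_right_mono) auto
    ultimately show ?thesis by linarith
  qed
  then show "\<exists>N'\<ge>N0. N' > 0 \<and> real (card (((\<lambda>n. n + m) ` A) \<inter> {1..N'})) \<ge> (1 - \<eta>) * real N'"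
    using N c by (intro exI[of _ "N + m"]) auto
qed


lemma card_lo: "real (card (X \<inter> {lo<..N})) \<ge> real (card (X \<inter> {1..N})) - real lo"
proof -
  have "X \<inter> {1..N} \<subseteq> (X \<inter> {lo<..N}) \<union> {1..lo}" by auto
  then have "card (X \<inter> {1..N}) \<le> card ((X \<inter> {lo<..N}) \<union> {1..lo})" by (intro card_mono) auto
  also have "\<dots> \<le> card (X \<inter> {lo<..N}) + card {1..lo}" by (rule card_Un_le)
  finally show ?thesis by simp
qed

lemma diag:
  assumes d: "\<And>i. dens1 (X i)" and dec: "\<And>i. X (Suc i) \<subseteq> X i"
  shows "\<exists>A. dens1 A \<and> A \<subseteq> X 0 \<and> (\<forall>i. \<exists>n0. \<forall>n\<in>A. n \<ge> n0 \<longrightarrow> n \<in> X i)"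
proof -
  have "\<forall>i N0. \<exists>N. N \<ge> N0 \<and> N > 0 \<and> real (card (X i \<inter> {1..N})) \<ge> (1 - 1 / real (i + 1)) * real N"
  proof (intro allI)
    fix i N0
    have "1 / real (i + 1) > 0" by simp
    then show "\<exists>N. N \<ge> N0 \<and> N > 0 \<and> real (card (X i \<inter> {1..N})) \<ge> (1 - 1 / real (i + 1)) * real N"
      using d[of i] unfolding dens1_def by blast
  qed
  then obtain Nf where Nf: "\<And>i N0. Nf i N0 \<ge> N0 \<and> Nf i N0 > 0 \<and>
      real (card (X i \<inter> {1..Nf i N0})) \<ge> (1 - 1 / real (i + 1)) * real (Nf i N0)"
    by metis
  define Ns where "Ns = rec_nat (Nf 0 1) (\<lambda>i prev. Nf (Suc i) ((i + 2) * prev + 1))"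
  have Ns0: "Ns 0 = Nf 0 1" and NsS: "\<And>i. Ns (Suc i) = Nf (Suc i) ((i + 2) * Ns i + 1)"
    by (simp_all add: Ns_def)
  have NsS_ge: "Ns (Suc i) \<ge> (i + 2) * Ns i + 1" for i using Nf NsS by metis
  have mono: "strict_mono Ns"
  proof (rule strict_monoI_Suc)
    fix n
    have "Ns n \<le> (n + 2) * Ns n" by simp
    then show "Ns n < Ns (Suc n)" using NsS_ge[of n] by linarith
  qed
  have Ns_ge: "Ns i \<ge> i + 1" for i
  proof (induction i)
    case 0 then show ?case using Nf Ns0 by (metis One_nat_def Suc_leI add_0)
  next
    case (Suc i)
    have "Ns i \<le> (i + 2) * Ns i" by simp
    then show ?case using NsS_ge[of i] Suc by linarith
  qed
  have card_Ns: "real (card (X i \<inter> {1..Ns i})) \<ge> (1 - 1 / real (i + 1)) * real (Ns i)" for i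
  proof (cases i)
    case 0 then show ?thesis using Nf[of 1 0] Ns0 by simp
  next
    case (Suc j) then show ?thesis using Nf[of "(j + 2) * Ns j + 1" "Suc j"] NsS[of j] by simp
  qed
  define lo where "lo i = (case i of 0 \<Rightarrow> 0 | Suc j \<Rightarrow> Ns j)" for i
  have lo_le: "real (i + 1) * real (lo i) \<le> real (Ns i)" for i
  proof (cases i)
    case 0 then show ?thesis by (simp add: lo_def)
  next
    case (Suc j)
    have "(j + 2) * Ns j \<le> Ns (Suc j)" using NsS_ge[of j] by linarith
    then have "real ((j + 2) * Ns j) \<le> real (Ns (Suc j))" by linarith
    then show ?thesis using Suc by (simp add: lo_def algebra_simps)
  qed
  have anti: "X j \<subseteq> X i" if "i \<le> j" for i j
    using that by (rule lift_Suc_antimono_le[of X, OF dec])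
  define A where "A = (\<Union>i. X i \<inter> {lo i<..Ns i})"
  have "A \<subseteq> X 0" unfolding A_def using anti by blast
  moreover have "\<forall>i. \<exists>n0. \<forall>n\<in>A. n \<ge> n0 \<longrightarrow> n \<in> X i"
  proof (intro allI exI[of _ "Ns _ + 1"] ballI impI)
    fix i n assume nA: "n \<in> A" and n: "n \<ge> Ns i + 1"
    then obtain j where j: "n \<in> X j" "n \<le> Ns j" unfolding A_def by auto
    have "i < j"
    proof (rule ccontr)
      assume "\<not> i < j"
      then have "Ns j \<le> Ns i" using mono by (simp add: strict_mono_less_eq)
      then show False using j n by auto
    qed
    then show "n \<in> X i" using anti[of i j] j by auto
  qed
  moreover have "dens1 A"
    unfolding dens1_def
  proof (intro allI impI)
    fix \<eta> :: real and N0 assume e: "\<eta> > 0"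
    define i where "i = max N0 (nat \<lceil>2 / \<eta>\<rceil>)"
    have i1: "real (i + 1) \<ge> 2 / \<eta>" unfolding i_def by linarith
    have "X i \<inter> {lo i<..Ns i} \<subseteq> A \<inter> {1..Ns i}" unfolding A_def by auto
    then have "card (X i \<inter> {lo i<..Ns i}) \<le> card (A \<inter> {1..Ns i})" by (intro card_mono) auto
    then have "real (card (A \<inter> {1..Ns i})) \<ge> (1 - 1 / real (i + 1)) * real (Ns i) - real (lo i)"
      using card_lo[where X="X i" and lo="lo i" and N="Ns i"] card_Ns[of i] by linarith
    moreover have "real (lo i) \<le> 1 / real (i + 1) * real (Ns i)"
      using lo_le[of i] by (simp add: field_simps)
    moreover have "1 / real (i + 1) * real (Ns i) \<le> \<eta> / 2 * real (Ns i)"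
    proof (rule mult_right_mono)
      show "1 / real (i + 1) \<le> \<eta> / 2" using i1 e by (auto simp: field_simps)
    qed simp
    moreover have "(1 - 1 / real (i + 1)) * real (Ns i) = real (Ns i) - 1 / real (i + 1) * real (Ns i)"
      "(1 - \<eta>) * real (Ns i) = real (Ns i) - 2 * (\<eta> / 2 * real (Ns i))" by (simp_all add: algebra_simps)
    ultimately have "real (card (A \<inter> {1..Ns i})) \<ge> (1 - \<eta>) * real (Ns i)"
      by linarith
    moreover have "Ns i \<ge> N0" "Ns i > 0" using Ns_ge[of i] unfolding i_def by auto
    ultimately show "\<exists>N\<ge>N0. N > 0 \<and> real (card (A \<inter> {1..N})) \<ge> (1 - \<eta>) * real N" by blast
  qed
  ultimately show ?thesis by blast
qed


definition cnt :: "nat set \<Rightarrow> nat \<Rightarrow> nat \<Rightarrow> nat" where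
  "cnt X s L = card {n \<in> {1..L}. s + n \<in> X}"

lemma cnt_0[simp]: "cnt X s 0 = 0" by (simp add: cnt_def)

lemma cnt_Suc: "cnt X s (Suc L) = cnt X s L + (if s + Suc L \<in> X then 1 else 0)"
proof -
  have e: "{n \<in> {1..Suc L}. s + n \<in> X} = {n \<in> {1..L}. s + n \<in> X} \<union> (if s + Suc L \<in> X then {Suc L} else {})"
    by (auto simp: le_Suc_eq)
  show ?thesis unfolding cnt_def e by (auto simp: card_insert_if)
qed

lemma cnt_split: "cnt X s (a + m) = cnt X s a + cnt X (s + a) m"
  by (induction m) (auto simp: cnt_Suc add.assoc)

lemma cnt_le: "cnt X s L \<le> L"
proof -
  have "cnt X s L \<le> card {1..L}" unfolding cnt_def by (intro card_mono) auto
  then show ?thesis by simp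
qed

lemma cnt_mono: "X \<subseteq> Y \<Longrightarrow> cnt X s L \<le> cnt Y s L"
  unfolding cnt_def by (intro card_mono) auto

lemma sweep:
  fixes HI HS :: "nat set" and R :: nat and \<eta> :: real and b :: nat
  assumes eta: "0 < \<eta>" "\<eta> < 1"
    and sub: "HS \<subseteq> HI"
    and hprop: "\<And>t d. t \<in> HS \<Longrightarrow> d \<le> R \<Longrightarrow> d \<le> t \<Longrightarrow> t - d \<in> HI"
    and hfail: "\<And>s L. s \<ge> b \<Longrightarrow> s \<notin> HI \<Longrightarrow> L \<ge> R \<Longrightarrow> real (cnt HS s L) < (1 - \<eta>) * real L"
  shows "s \<ge> b \<Longrightarrow> s \<notin> HI \<Longrightarrow> real (cnt HS s len) \<le> (1 - \<eta>) * real (cnt HI s len)"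
proof (induction len arbitrary: s rule: less_induct)
  case (less len)
  show ?case
  proof (cases "\<forall>d\<in>{1..len}. s + d \<in> HI")
    case True
    then have "{n \<in> {1..len}. s + n \<in> HI} = {1..len}" by auto
    then have cI: "cnt HI s len = len" unfolding cnt_def by simp
    show ?thesis
    proof (cases "len \<ge> R")
      case True
      then show ?thesis using hfail[of s len] less.prems cI by auto
    next
      case False
      have "{n \<in> {1..len}. s + n \<in> HS} = {}"
      proof (rule ccontr)
        assume "{n \<in> {1..len}. s + n \<in> HS} \<noteq> {}"
        then obtain n where n: "n \<in> {1..len}" "s + n \<in> HS" by auto
        then have "s + n - n \<in> HI" using hprop[of "s + n" n] False by auto
        then show False using less.prems by auto
      qed
      then have "cnt HS s len = 0" unfolding cnt_def by simp
      then show ?thesis using eta by simp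
    qed
  next
    case False
    define q where "q = (LEAST d. d \<in> {1..len} \<and> s + d \<notin> HI)"
    have ex: "\<exists>d. d \<in> {1..len} \<and> s + d \<notin> HI" using False by auto
    have q: "q \<in> {1..len}" "s + q \<notin> HI" using LeastI_ex[OF ex] unfolding q_def by auto
    have split: "cnt X s len = cnt X s (q - 1) + (if s + q \<in> X then 1 else 0) + cnt X (s + q) (len - q)" for X
    proof -
      have "len = (q - 1) + (Suc 0 + (len - q))" using q by auto
      then have "cnt X s len = cnt X s (q - 1) + cnt X (s + (q - 1)) (Suc 0 + (len - q))"
        by (metis cnt_split)
      also have "cnt X (s + (q - 1)) (Suc 0 + (len - q)) = cnt X (s + (q - 1)) (Suc 0) + cnt X (s + (q - 1) + Suc 0) (len - q)"
        by (rule cnt_split)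
      also have "cnt X (s + (q - 1)) (Suc 0) = (if s + q \<in> X then 1 else 0)"
        using q by (simp add: cnt_Suc)
      also have "s + (q - 1) + Suc 0 = s + q" using q by auto
      finally show ?thesis by simp
    qed
    have IH1: "real (cnt HS s (q - 1)) \<le> (1 - \<eta>) * real (cnt HI s (q - 1))"
      using less.IH[of "q - 1" s] less.prems q by auto
    have IH2: "real (cnt HS (s + q) (len - q)) \<le> (1 - \<eta>) * real (cnt HI (s + q) (len - q))"
      using less.IH[of "len - q" "s + q"] less.prems q by auto
    have nq: "s + q \<notin> HS" using q sub by auto
    show ?thesis using split[of HS] split[of HI] IH1 IH2 q(2) nq by (simp add: algebra_simps)
  qed
qed

lemma run_lemma:
  fixes F :: "nat \<Rightarrow> real" and M K \<eta> :: real and R b I N :: nat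
  assumes Fpos: "\<And>t. F t > 0"
    and FM: "\<And>t. F (Suc t) \<le> M * F t"
    and M1: "M \<ge> 1" and K1: "K > 1" and KM: "K \<ge> M ^ R"
    and eta: "0 < \<eta>" "\<eta> < 1"
    and big: "real (card {n \<in> {1..N}. F (b + n) \<ge> F b * K ^ (I + 1)}) > (1 - \<eta>) ^ I * real N"
  shows "\<exists>s L. s \<ge> b \<and> L \<ge> R \<and> real (card {n \<in> {1..L}. F (s + n) \<ge> K * F s}) \<ge> (1 - \<eta>) * real L"
proof (rule ccontr)
  assume nc: "\<not> ?thesis"
  define H where "H i = {t. F t \<ge> F b * K ^ (i + 1)}" for i
  have Fback: "F (t - d) * M ^ d \<ge> F t" if "d \<le> t" for t d
    using that
  proof (induction d)
    case 0 then show ?case by simp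
  next
    case (Suc d)
    have "F (t - d) \<le> M * F (t - Suc d)" using FM[of "t - Suc d"] Suc.prems
      by (metis Suc_diff_Suc Suc_le_lessD)
    then have "F (t - d) * M ^ d \<le> M * F (t - Suc d) * M ^ d"
      using M1 by (intro mult_right_mono) auto
    then show ?case using Suc by (auto simp: algebra_simps)
  qed
  have sub: "H (Suc i) \<subseteq> H i" for i
  proof
    fix t assume "t \<in> H (Suc i)"
    then have "F t \<ge> F b * K ^ (i + 2)" by (simp add: H_def)
    moreover have "F b * K ^ (i + 1) \<le> F b * K ^ (i + 2)"
      using Fpos[of b] K1 by (intro mult_left_mono power_increasing) auto
    ultimately show "t \<in> H i" by (simp add: H_def)
  qed
  have hprop: "t - d \<in> H i" if "t \<in> H (Suc i)" "d \<le> R" "d \<le> t" for t d i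
  proof -
    have "F t \<ge> F b * K ^ (i + 1) * K" using that by (simp add: H_def algebra_simps)
    moreover have "F (t - d) * M ^ R \<ge> F (t - d) * M ^ d"
      using Fpos[of "t - d"] M1 that by (intro mult_left_mono power_increasing) auto
    moreover have "F (t - d) * K \<ge> F (t - d) * M ^ R" using Fpos[of "t - d"] KM by (intro mult_left_mono) auto
    ultimately have "F (t - d) * K \<ge> F b * K ^ (i + 1) * K" using Fback[OF that(3)] by linarith
    then have "F (t - d) \<ge> F b * K ^ (i + 1)" using K1 by (auto simp: mult.commute)
    then show ?thesis by (simp add: H_def)
  qed
  have hfail: "real (cnt (H (Suc i)) s L) < (1 - \<eta>) * real L"
    if "s \<ge> b" "s \<notin> H i" "L \<ge> R" for s L i
  proof -
    have Fs: "F s < F b * K ^ (i + 1)" using that by (simp add: H_def)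
    have "{n \<in> {1..L}. s + n \<in> H (Suc i)} \<subseteq> {n \<in> {1..L}. F (s + n) \<ge> K * F s}"
    proof safe
      fix n assume "s + n \<in> H (Suc i)"
      then have "F (s + n) \<ge> F b * K ^ (i + 1) * K" by (simp add: H_def algebra_simps)
      moreover have "F b * K ^ (i + 1) * K \<ge> F s * K" using Fs K1 by (auto simp: mult.commute)
      ultimately show "F (s + n) \<ge> K * F s" by (simp add: algebra_simps)
    qed
    then have "cnt (H (Suc i)) s L \<le> card {n \<in> {1..L}. F (s + n) \<ge> K * F s}"
      unfolding cnt_def by (intro card_mono) auto
    moreover have "real (card {n \<in> {1..L}. F (s + n) \<ge> K * F s}) < (1 - \<eta>) * real L"
      using nc that by (meson not_le)
    ultimately show ?thesis by linarith
  qed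
  have bnot: "b \<notin> H i" for i
  proof -
    have "1 < K ^ (i + 1)" using K1 by (intro one_less_power) auto
    then have "F b < F b * K ^ (i + 1)" using Fpos[of b] by auto
    then show ?thesis by (simp add: H_def)
  qed
  have step: "real (cnt (H (Suc i)) b N) \<le> (1 - \<eta>) * real (cnt (H i) b N)" for i
    using sweep[of \<eta> "H (Suc i)" "H i" R b, OF eta sub hprop hfail _ bnot] by auto
  have "real (cnt (H i) b N) \<le> (1 - \<eta>) ^ i * real N" for i
  proof (induction i)
    case 0 then show ?case using cnt_le[of "H 0" b N] by simp
  next
    case (Suc i)
    have "real (cnt (H (Suc i)) b N) \<le> (1 - \<eta>) * real (cnt (H i) b N)" by (rule step)
    also have "\<dots> \<le> (1 - \<eta>) * ((1 - \<eta>) ^ i * real N)" using Suc eta by (intro mult_left_mono) auto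
    finally show ?case by simp
  qed
  moreover have "cnt (H I) b N = card {n \<in> {1..N}. F (b + n) \<ge> F b * K ^ (I + 1)}"
    unfolding cnt_def H_def by simp
  ultimately show False using big by (metis not_le)
qed


context wsetup
begin

lemma powr_add_le: "0 \<le> a \<Longrightarrow> 0 \<le> b \<Longrightarrow> (a + b) powr p \<le> 2 powr p * (a powr p + b powr p)"
proof -
  assume a: "0 \<le> a" and b: "0 \<le> b"
  have "(a + b) powr p \<le> (2 * max a b) powr p" using a b p0 by (intro powr_mono2) auto
  also have "\<dots> = 2 powr p * max a b powr p" using a b by (simp add: powr_mult)
  also have "max a b powr p \<le> a powr p + b powr p" by (auto simp: max_def)
  then have "2 powr p * max a b powr p \<le> 2 powr p * (a powr p + b powr p)" by (intro mult_left_mono) auto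
  finally show ?thesis .
qed

lemma cmod_powr_add_le: "cmod (x + y) powr p \<le> 2 powr p * (cmod x powr p + cmod y powr p)"
proof -
  have "cmod (x + y) powr p \<le> (cmod x + cmod y) powr p" using p0 by (intro powr_mono2 norm_triangle_ineq) auto
  also have "\<dots> \<le> 2 powr p * (cmod x powr p + cmod y powr p)" by (rule powr_add_le) auto
  finally show ?thesis .
qed

lemma lp_space_add: "x \<in> lp_space p v \<Longrightarrow> y \<in> lp_space p v \<Longrightarrow> (\<lambda>m. x m + y m) \<in> lp_space p v"
proof -
  assume x: "x \<in> lp_space p v" and y: "y \<in> lp_space p v"
  have "summable (\<lambda>m. cmod ((x m + y m)) powr p * v m)"
  proof (rule summable_comparison_test)
    show "summable (\<lambda>m. 2 powr p * (cmod (x m) powr p * v m + cmod (y m) powr p * v m))"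
      using x y by (auto simp: lp_space_def intro!: summable_mult summable_add)
    show "\<exists>N. \<forall>n\<ge>N. norm (cmod ((x n + y n)) powr p * v n) \<le> 2 powr p * (cmod (x n) powr p * v n + cmod (y n) powr p * v n)"
    proof (intro exI allI impI)
      fix n :: nat assume "n \<ge> 1"
      then have vn: "v n > 0" using vpos by auto
      have "norm (cmod ((x n + y n)) powr p * v n) = cmod (x n + y n) powr p * v n" using vn by simp
      also have "\<dots> \<le> 2 powr p * (cmod (x n) powr p + cmod (y n) powr p) * v n"
        using vn by (intro mult_right_mono cmod_powr_add_le) auto
      finally show "norm (cmod ((x n + y n)) powr p * v n) \<le> 2 powr p * (cmod (x n) powr p * v n + cmod (y n) powr p * v n)"
        by (simp add: algebra_simps)
    qed
  qed
  then show ?thesis using x y by (simp add: lp_space_def)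
qed

lemma lp_space_scale: "x \<in> lp_space p v \<Longrightarrow> (\<lambda>m. c * x m) \<in> lp_space p v"
proof -
  assume x: "x \<in> lp_space p v"
  have "(\<lambda>m. cmod (c * x m) powr p * v m) = (\<lambda>m. cmod c powr p * (cmod (x m) powr p * v m))"
    by (auto simp: norm_mult powr_mult)
  moreover have "summable (\<lambda>m. cmod c powr p * (cmod (x m) powr p * v m))"
    using x by (auto simp: lp_space_def intro: summable_mult)
  ultimately show ?thesis using x by (simp add: lp_space_def)
qed

lemma lp_space_diff: "x \<in> lp_space p v \<Longrightarrow> y \<in> lp_space p v \<Longrightarrow> x - y \<in> lp_space p v"
proof -
  assume x: "x \<in> lp_space p v" and y: "y \<in> lp_space p v"
  have "(\<lambda>m. (-1) * y m) \<in> lp_space p v" using lp_space_scale[OF y] .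
  then have "(\<lambda>m. x m + (-1) * y m) \<in> lp_space p v" using lp_space_add[OF x] by blast
  moreover have "(\<lambda>m. x m + (-1) * y m) = x - y" by (auto simp: fun_eq_iff)
  ultimately show ?thesis by simp
qed

lemma lp_space_fin: "u 0 = 0 \<Longrightarrow> (\<And>m. m > U \<Longrightarrow> u m = 0) \<Longrightarrow> u \<in> lp_space p v"
proof -
  assume u0: "u 0 = 0" and uU: "\<And>m. m > U \<Longrightarrow> u m = 0"
  have "summable (\<lambda>m. cmod (u m) powr p * v m)"
  proof (rule summable_finite[of "{..U}"])
    fix n assume "n \<notin> {..U}"
    then have "u n = 0" using uU by auto
    then show "cmod (u n) powr p * v n = 0" by simp
  qed simp
  then show ?thesis using u0 by (simp add: lp_space_def)
qed

lemma phi_add_le: "x \<in> lp_space p v \<Longrightarrow> y \<in> lp_space p v \<Longrightarrow> phi p v (\<lambda>m. x m + y m) j \<le> 2 powr p * (phi p v x j + phi p v y j)"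
proof -
  assume x: "x \<in> lp_space p v" and y: "y \<in> lp_space p v"
  have "phi p v (\<lambda>m. x m + y m) j \<le> (\<Sum>m. 2 powr p * (cmod (x m) powr p * v (m + j) + cmod (y m) powr p * v (m + j)))"
    unfolding phi_def
  proof (rule suminf_le)
    fix m
    show "cmod ((x m + y m)) powr p * v (m + j) \<le> 2 powr p * (cmod (x m) powr p * v (m + j) + cmod (y m) powr p * v (m + j))"
    proof (cases "m = 0")
      case True then show ?thesis using x y by (simp add: lp_space_def)
    next
      case False
      then have vn: "v (m + j) > 0" using vpos by auto
      have "cmod ((x m + y m)) powr p * v (m + j) \<le> 2 powr p * (cmod (x m) powr p + cmod (y m) powr p) * v (m + j)"
        using vn by (intro mult_right_mono cmod_powr_add_le) auto
      then show ?thesis by (simp add: algebra_simps)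
    qed
    show "summable (\<lambda>m. cmod ((x m + y m)) powr p * v (m + j))" using summable_shifted lp_space_add x y by blast
    show "summable (\<lambda>m. 2 powr p * (cmod (x m) powr p * v (m + j) + cmod (y m) powr p * v (m + j)))"
      using summable_shifted x y by (auto intro!: summable_mult summable_add)
  qed
  also have "\<dots> = 2 powr p * (phi p v x j + phi p v y j)" unfolding phi_def
    using summable_shifted x y by (subst suminf_mult) (auto intro!: summable_add simp: suminf_add)
  finally show ?thesis .
qed

lemma phi_scale: "x \<in> lp_space p v \<Longrightarrow> phi p v (\<lambda>m. c * x m) j = cmod c powr p * phi p v x j"
proof -
  assume x: "x \<in> lp_space p v"
  have "(\<lambda>m. cmod (c * x m) powr p * v (m + j)) = (\<lambda>m. cmod c powr p * (cmod (x m) powr p * v (m + j)))"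
    by (auto simp: norm_mult powr_mult)
  then show ?thesis unfolding phi_def using summable_shifted[OF x] by (simp add: suminf_mult)
qed

lemma phi_fin: "u 0 = 0 \<Longrightarrow> (\<And>m. m > U \<Longrightarrow> u m = 0) \<Longrightarrow> phi p v u j = (\<Sum>m\<in>{1..U}. cmod (u m) powr p * v (m + j))"
  unfolding phi_def
proof (rule suminf_finite)
  fix n assume "u 0 = 0" "\<And>m. m > U \<Longrightarrow> u m = 0" "n \<notin> {1..U}"
  then show "cmod (u n) powr p * v (n + j) = 0" by (cases "n = 0") auto
qed simp

lemma phi_fin_bound:
  assumes "u 0 = 0" "\<And>m. m > U \<Longrightarrow> u m = 0" "j \<ge> 1"
  shows "phi p v u j \<le> (\<Sum>m\<in>{1..U}. cmod (u m) powr p * M ^ m) * v j"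
proof -
  have "phi p v u j = (\<Sum>m\<in>{1..U}. cmod (u m) powr p * v (m + j))" using phi_fin assms by blast
  also have "\<dots> \<le> (\<Sum>m\<in>{1..U}. cmod (u m) powr p * (M ^ m * v j))"
  proof (rule sum_mono)
    fix m assume "m \<in> {1..U}"
    have "v (j + m) \<le> M ^ m * v j" using v_growth assms by auto
    then show "cmod (u m) powr p * v (m + j) \<le> cmod (u m) powr p * (M ^ m * v j)"
      by (intro mult_left_mono) (auto simp: add.commute)
  qed
  also have "\<dots> = (\<Sum>m\<in>{1..U}. cmod (u m) powr p * M ^ m) * v j"
    by (subst sum_distrib_right) (simp add: algebra_simps)
  finally show ?thesis .
qed

lemma phi_ge_partial: "z \<in> lp_space p v \<Longrightarrow> finite T \<Longrightarrow> (\<Sum>m\<in>T. cmod (z m) powr p * v (m + j)) \<le> phi p v z j"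
  unfolding phi_def
  by (rule sum_le_suminf) (auto simp: summable_shifted lp_space_def intro: term_nonneg)

lemma powr_inv_less_iff: "0 \<le> a \<Longrightarrow> 0 < d \<Longrightarrow> (a powr (1 / p) < d \<longleftrightarrow> a < d powr p)"
proof -
  assume a: "0 \<le> a" and d: "0 < d"
  have "a powr (1 / p) < d \<longleftrightarrow> (a powr (1 / p)) powr p < d powr p"
  proof
    assume "a powr (1 / p) < d" then show "(a powr (1 / p)) powr p < d powr p"
      using p0 by (intro powr_less_mono2) auto
  next
    assume h: "(a powr (1 / p)) powr p < d powr p"
    show "a powr (1 / p) < d"
    proof (rule ccontr)
      assume "\<not> a powr (1 / p) < d"
      then have "d powr p \<le> (a powr (1 / p)) powr p" using p0 d by (intro powr_mono2) auto
      then show False using h by auto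
    qed
  qed
  also have "(a powr (1 / p)) powr p = a" using a p0 by (simp add: powr_powr powr_one)
  finally show ?thesis .
qed

lemma norm_orbit_diff: "x \<in> lp_space p v \<Longrightarrow> y \<in> lp_space p v \<Longrightarrow> d > 0 \<Longrightarrow>
    (lp_norm p v ((fwd_shift ^^ j) x - (fwd_shift ^^ j) y) < d \<longleftrightarrow> phi p v (x - y) j < d powr p)"
proof -
  assume x: "x \<in> lp_space p v" and y: "y \<in> lp_space p v" and d: "d > 0"
  have xy: "x - y \<in> lp_space p v" using lp_space_diff x y by blast
  have "lp_norm p v ((fwd_shift ^^ j) x - (fwd_shift ^^ j) y) = phi p v (x - y) j powr (1 / p)"
    using lp_norm_shift[OF xy] by (simp add: fwd_shift_pow_diff)
  then show ?thesis using powr_inv_less_iff[OF phi_nonneg[OF xy] d] by simp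
qed

lemma norm_diff: "x \<in> lp_space p v \<Longrightarrow> y \<in> lp_space p v \<Longrightarrow> d > 0 \<Longrightarrow>
    (lp_norm p v (x - y) < d \<longleftrightarrow> phi p v (x - y) 0 < d powr p)"
  using norm_orbit_diff[of x y d 0] by simp

end


context wsetup
begin

lemma dens1_nonempty: "dens1 X \<Longrightarrow> \<exists>m. m \<in> X"
proof -
  assume "dens1 X"
  then obtain N where N: "N > 0" "real (card (X \<inter> {1..N})) \<ge> (1 - 1/2) * real N"
    unfolding dens1_def by (meson half_gt_zero zero_less_one)
  then have "real (card (X \<inter> {1..N})) > 0" by simp
  then have "card (X \<inter> {1..N}) \<noteq> 0" by linarith
  then have "X \<inter> {1..N} \<noteq> {}" by (metis card.empty)
  then show ?thesis by blast
qed

lemma one_k: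
  assumes z: "z \<in> lp_space p v" and e0: "e0 > 0"
    and G: "dens1 {j. phi p v z j \<ge> e0}"
    and small: "\<And>t. t > 0 \<Longrightarrow> dens1 {j. phi p v z j < t}"
    and k: "k \<ge> 1"
  shows "\<exists>N S C. N \<ge> N0 \<and> N \<ge> 1 \<and> finite S \<and> S \<noteq> {} \<and> S \<subseteq> {1..} \<and> (\<forall>j\<in>S. C j \<noteq> (0::complex)) \<and>
     real (card {n \<in> {1..N}. (\<Sum>j\<in>S. cmod (C j) * v (n + j)) / (\<Sum>j\<in>S. cmod (C j) * v j) \<ge> real k}) \<ge> real N * (1/2)"
proof -
  have z0: "z 0 = 0" using z by (simp add: lp_space_def)
  have "e0 / (2 * real k) > 0" using e0 k by auto
  then obtain m where m: "phi p v z m < e0 / (2 * real k)" using dens1_nonempty[OF small] by blast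
  obtain N where N: "N \<ge> max N0 (4 * m + 1)" "N > 0" "real (card ({j. phi p v z j \<ge> e0} \<inter> {1..N})) \<ge> (1 - 1/4) * real N"
    using G unfolding dens1_def by (meson zero_less_divide_iff zero_less_numeral zero_less_one)
  define Gs where "Gs = {j. phi p v z j \<ge> e0}"
  define Good where "Good = {n \<in> {1..N}. n + m \<in> Gs}"
  have "(\<lambda>t. t - m) ` (Gs \<inter> {m<..N}) \<subseteq> Good" unfolding Good_def by auto
  moreover have "inj_on (\<lambda>t. t - m) (Gs \<inter> {m<..N})" by (auto simp: inj_on_def)
  moreover have "finite Good" unfolding Good_def by auto
  ultimately have "card ((\<lambda>t. t - m) ` (Gs \<inter> {m<..N})) \<le> card Good"
    "card ((\<lambda>t. t - m) ` (Gs \<inter> {m<..N})) = card (Gs \<inter> {m<..N})"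
    by (auto intro: card_mono card_image)
  then have "card (Gs \<inter> {m<..N}) \<le> card Good" by simp
  moreover have "real (card (Gs \<inter> {m<..N})) \<ge> real (card (Gs \<inter> {1..N})) - real m"
    by (rule card_lo)
  moreover have "real m \<le> real N / 4" using N(1) by auto
  ultimately have cGood: "real (card Good) \<ge> real N / 2" using N(3) unfolding Gs_def by (auto simp: algebra_simps)
  have finGood: "finite Good" unfolding Good_def by auto
  have lim: "(\<lambda>L. \<Sum>i<L. cmod (z i) powr p * v (i + (n + m))) \<longlonglongrightarrow> phi p v z (n + m)" for n
    unfolding phi_def using summable_shifted[OF z] by (rule summable_LIMSEQ)
  have "\<forall>n\<in>Good. eventually (\<lambda>L. (\<Sum>i<L. cmod (z i) powr p * v (i + (n + m))) > e0 / 2) sequentially"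
  proof
    fix n assume "n \<in> Good"
    then have "phi p v z (n + m) \<ge> e0" unfolding Good_def Gs_def by auto
    then have "phi p v z (n + m) > e0 / 2" using e0 by auto
    then show "eventually (\<lambda>L. (\<Sum>i<L. cmod (z i) powr p * v (i + (n + m))) > e0 / 2) sequentially"
      by (rule order_tendstoD(1)[OF lim[of n]])
  qed
  then have "eventually (\<lambda>L. \<forall>n\<in>Good. (\<Sum>i<L. cmod (z i) powr p * v (i + (n + m))) > e0 / 2) sequentially"
    using finGood by (simp add: eventually_ball_finite)
  then obtain L where L: "\<And>n. n \<in> Good \<Longrightarrow> (\<Sum>i<L. cmod (z i) powr p * v (i + (n + m))) > e0 / 2"
    unfolding eventually_sequentially by blast
  define T where "T = {i \<in> {..<L}. z i \<noteq> 0}"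
  define S where "S = (\<lambda>i. i + m) ` T"
  define C where "C j = complex_of_real (cmod (z (j - m)) powr p)" for j
  have finT: "finite T" unfolding T_def by auto
  have injT: "inj_on (\<lambda>i. i + m) T" by (auto simp: inj_on_def)
  have T1: "i \<ge> 1" if "i \<in> T" for i using that z0 unfolding T_def by (cases i) auto
  have sumS: "(\<Sum>j\<in>S. cmod (C j) * v (n + j)) = (\<Sum>i\<in>T. cmod (z i) powr p * v (i + (n + m)))" for n
    unfolding S_def by (subst sum.reindex[OF injT]) (auto simp: C_def algebra_simps intro!: sum.cong)
  have sumT: "(\<Sum>i\<in>T. cmod (z i) powr p * v (i + j)) = (\<Sum>i<L. cmod (z i) powr p * v (i + j))" for j
    unfolding T_def by (rule sum.mono_neutral_left) auto
  have Gne: "Good \<noteq> {}" using cGood N(2) by auto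
  then obtain n1 where n1: "n1 \<in> Good" by auto
  have "T \<noteq> {}"
  proof
    assume "T = {}"
    then have "(\<Sum>i<L. cmod (z i) powr p * v (i + (n1 + m))) = 0" using sumT[of "n1 + m"] by simp
    then show False using L[OF n1] e0 by auto
  qed
  then have Sne: "S \<noteq> {}" unfolding S_def by auto
  have Spos: "S \<subseteq> {1..}" unfolding S_def using T1 by force
  have Cne: "\<forall>j\<in>S. C j \<noteq> 0" unfolding S_def C_def T_def using p0 by auto
  have den_pos: "(\<Sum>j\<in>S. cmod (C j) * v j) > 0"
  proof (rule sum_pos)
    show "finite S" unfolding S_def using finT by auto
    show "S \<noteq> {}" by (rule Sne)
    fix j assume "j \<in> S"
    then show "cmod (C j) * v j > 0" using Cne Spos vpos[of j] by auto
  qed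
  have den_le: "(\<Sum>j\<in>S. cmod (C j) * v j) \<le> phi p v z m"
  proof -
    have "(\<Sum>j\<in>S. cmod (C j) * v j) = (\<Sum>j\<in>S. cmod (C j) * v (0 + j))" by simp
    also have "\<dots> = (\<Sum>i\<in>T. cmod (z i) powr p * v (i + m))" using sumS[of 0] by simp
    also have "\<dots> \<le> phi p v z m" by (rule phi_ge_partial[OF z finT])
    finally show ?thesis .
  qed
  have "Good \<subseteq> {n \<in> {1..N}. (\<Sum>j\<in>S. cmod (C j) * v (n + j)) / (\<Sum>j\<in>S. cmod (C j) * v j) \<ge> real k}"
  proof safe
    fix n assume n: "n \<in> Good"
    then show "n \<in> {1..N}" unfolding Good_def by auto
    have num: "(\<Sum>j\<in>S. cmod (C j) * v (n + j)) > e0 / 2" using sumS[of n] sumT[of "n + m"] L[OF n] by simp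
    have "real k * (\<Sum>j\<in>S. cmod (C j) * v j) \<le> real k * (e0 / (2 * real k))"
      using den_le m k by (intro mult_left_mono) auto
    also have "\<dots> = e0 / 2" using k by auto
    finally have "real k * (\<Sum>j\<in>S. cmod (C j) * v j) \<le> (\<Sum>j\<in>S. cmod (C j) * v (n + j))" using num by linarith
    then show "real k \<le> (\<Sum>j\<in>S. cmod (C j) * v (n + j)) / (\<Sum>j\<in>S. cmod (C j) * v j)"
      using den_pos by (simp add: le_divide_eq)
  qed
  then have "card Good \<le> card {n \<in> {1..N}. (\<Sum>j\<in>S. cmod (C j) * v (n + j)) / (\<Sum>j\<in>S. cmod (C j) * v j) \<ge> real k}"
    by (intro card_mono) auto
  then have "real (card {n \<in> {1..N}. (\<Sum>j\<in>S. cmod (C j) * v (n + j)) / (\<Sum>j\<in>S. cmod (C j) * v j) \<ge> real k}) \<ge> real N * (1/2)"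
    using cGood by linarith
  moreover have "finite S" unfolding S_def using finT by auto
  ultimately show ?thesis using N Sne Spos Cne by (intro exI[of _ N] exI[of _ S] exI[of _ C]) auto
qed

end


definition condC :: "real \<Rightarrow> (nat \<Rightarrow> real) \<Rightarrow> bool" where
  "condC p v \<longleftrightarrow> (\<exists>S :: nat \<Rightarrow> nat set.
                  (\<forall>k\<ge>1. finite (S k) \<and> S k \<noteq> {} \<and> S k \<subseteq> {1..})
                \<and> (\<exists>A. A \<subseteq> {1..} \<and> upper_dens A = 1 \<and>
                     (\<forall>e>0. \<exists>n0. \<forall>n\<in>A. n \<ge> n0 \<longrightarrow> v n < e))
                \<and> (\<exists>\<epsilon>>0. \<exists>N :: nat \<Rightarrow> nat. \<exists>C :: nat \<Rightarrow> nat \<Rightarrow> complex.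
                     N 1 \<ge> 1 \<and> (\<forall>k\<ge>1. N k < N (k + 1))
                   \<and> (\<forall>k\<ge>1. \<forall>j\<in>S k. C k j \<noteq> 0)
                   \<and> (\<forall>k\<ge>1. real (card {n \<in> {1..N k}.
                          (\<Sum>j\<in>S k. cmod (C k j) * v (n + j)) / (\<Sum>j\<in>S k. cmod (C k j) * v j)
                            \<ge> real k}) \<ge> real (N k) * \<epsilon>)))"

context wsetup
begin

lemma a_imp_c:
  assumes dc: "distr_chaotic (lp_space p v) fwd_shift (lp_norm p v)"
  shows "condC p v"
proof -
  obtain \<Gamma> \<epsilon> where \<Gamma>: "\<Gamma> \<subseteq> lp_space p v" and dcs: "dc_set fwd_shift (lp_norm p v) \<Gamma> \<epsilon>"
    using dc unfolding distr_chaotic_def by blast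
  have unc: "uncountable \<Gamma>" and eps: "\<epsilon> > 0" using dcs unfolding dc_set_def by auto
  have "\<Gamma> \<noteq> {}" using unc by auto
  then obtain x where x: "x \<in> \<Gamma>" by auto
  have "\<Gamma> \<noteq> {x}" using unc by auto
  then obtain y where y: "y \<in> \<Gamma>" "y \<noteq> x" using x by auto
  have hp: "lower_dens {j. lp_norm p v ((fwd_shift ^^ j) x - (fwd_shift ^^ j) y) < \<epsilon>} = 0 \<and>
      upper_dens {j. lp_norm p v ((fwd_shift ^^ j) x - (fwd_shift ^^ j) y) < d} = 1" if "d > 0" for d
    using dcs x y that unfolding dc_set_def by auto
  define z where "z = x - y"
  have xY: "x \<in> lp_space p v" and yY: "y \<in> lp_space p v" using x y \<Gamma> by auto
  have z: "z \<in> lp_space p v" unfolding z_def using lp_space_diff xY yY by blast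
  have z0: "z 0 = 0" using z by (simp add: lp_space_def)
  have zne: "\<exists>m. z m \<noteq> 0"
  proof (rule ccontr)
    assume "\<not> (\<exists>m. z m \<noteq> 0)"
    then have "x = y" unfolding z_def by (auto simp: fun_eq_iff)
    then show False using y by auto
  qed
  have seteq: "{j. lp_norm p v ((fwd_shift ^^ j) x - (fwd_shift ^^ j) y) < d} = {j. phi p v z j < d powr p}" if "d > 0" for d
    using norm_orbit_diff[OF xY yY that] unfolding z_def by auto
  have small: "dens1 {j. phi p v z j < t}" if "t > 0" for t
  proof -
    define d where "d = t powr (1 / p)"
    have d: "d > 0" using that by (simp add: d_def)
    have "d powr p = t" using that p0 by (simp add: d_def powr_powr)
    then show ?thesis using hp[OF d] seteq[OF d] upper_dens_imp_dens1 by metis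
  qed
  have G: "dens1 {j. phi p v z j \<ge> \<epsilon> powr p}"
  proof -
    have "lower_dens {j. phi p v z j < \<epsilon> powr p} = 0" using hp[OF eps] seteq[OF eps] by metis
    then have "dens1 (- {j. phi p v z j < \<epsilon> powr p})" by (intro dens0_imp_dens1_compl lower_dens_imp_dens0)
    moreover have "- {j. phi p v z j < \<epsilon> powr p} = {j. phi p v z j \<ge> \<epsilon> powr p}" by auto
    ultimately show ?thesis by simp
  qed
  have e0: "\<epsilon> powr p > 0" using eps by simp
  obtain m0 where m0: "z m0 \<noteq> 0" using zne by auto
  have m01: "m0 \<ge> 1" using m0 z0 by (cases m0) auto
  define c0 where "c0 = cmod (z m0) powr p"
  have c0: "c0 > 0" using m0 by (simp add: c0_def)
  have c0le: "c0 * v (m0 + j) \<le> phi p v z j" for j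
    using phi_ge_partial[OF z, of "{m0}" j] by (simp add: c0_def)
  define X where "X i = {n. n \<ge> 1 \<and> v n < 1 / real (i + 1)}" for i
  have Xdec: "X (Suc i) \<subseteq> X i" for i
  proof
    fix n assume "n \<in> X (Suc i)"
    moreover have "1 / real (Suc i + 1) \<le> 1 / real (i + 1)" by (simp add: frac_le)
    ultimately show "n \<in> X i" unfolding X_def by auto
  qed
  have Xd: "dens1 (X i)" for i
  proof -
    have t: "c0 / real (i + 1) > 0" using c0 by simp
    have "(\<lambda>j. j + m0) ` {j. phi p v z j < c0 / real (i + 1)} \<subseteq> X i"
    proof
      fix n assume "n \<in> (\<lambda>j. j + m0) ` {j. phi p v z j < c0 / real (i + 1)}"
      then obtain j where j: "n = j + m0" "phi p v z j < c0 / real (i + 1)" by auto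
      then have "c0 * v (m0 + j) < c0 / real (i + 1)" using c0le[of j] by linarith
      then have "c0 * v (m0 + j) < c0 * (1 / real (i + 1))" by simp
      then have "v (m0 + j) < 1 / real (i + 1)" using c0 by (simp only: mult_less_cancel_left_pos)
      then have "v n < 1 / real (i + 1)" using j(1) by (simp add: add.commute)
      then show "n \<in> X i" unfolding X_def using j m01 by auto
    qed
    then show ?thesis using dens1_shift[OF small[OF t]] dens1_mono by blast
  qed
  obtain A where A: "dens1 A" "A \<subseteq> X 0" "\<forall>i. \<exists>n0. \<forall>n\<in>A. n \<ge> n0 \<longrightarrow> n \<in> X i"
    using diag[of X, OF Xd Xdec] by blast
  have partI: "A \<subseteq> {1..} \<and> upper_dens A = 1 \<and> (\<forall>e>0. \<exists>n0. \<forall>n\<in>A. n \<ge> n0 \<longrightarrow> v n < e)"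
  proof (intro conjI allI impI)
    show "A \<subseteq> {1..}" using A(2) unfolding X_def by auto
    show "upper_dens A = 1" using A(1) by (rule dens1_imp_upper_dens)
    fix e :: real assume e: "e > 0"
    obtain i where "inverse (real (Suc i)) < e" using reals_Archimedean[OF e] by blast
    then have i: "1 / real (i + 1) < e" by (simp add: inverse_eq_divide)
    obtain n0 where "\<forall>n\<in>A. n \<ge> n0 \<longrightarrow> n \<in> X i" using A(3) by blast
    then show "\<exists>n0. \<forall>n\<in>A. n \<ge> n0 \<longrightarrow> v n < e" using i unfolding X_def by force
  qed
  define Q where "Q k N0 N S C \<longleftrightarrow> (N \<ge> N0 \<and> N \<ge> 1 \<and> finite S \<and> S \<noteq> {} \<and> S \<subseteq> {1..} \<and> (\<forall>j\<in>S. C j \<noteq> (0::complex)) \<and>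
     real (card {n \<in> {1..N}. (\<Sum>j\<in>S. cmod (C j) * v (n + j)) / (\<Sum>j\<in>S. cmod (C j) * v j) \<ge> real k}) \<ge> real N * (1/2))"
    for k N0 N S C
  have "\<exists>N S C. k \<ge> 1 \<longrightarrow> Q k N0 N S C" for k N0
  proof (cases "k \<ge> 1")
    case True
    then show ?thesis using one_k[OF z e0 G small True, of N0] unfolding Q_def by blast
  qed auto
  then have "\<forall>k. \<forall>N0. \<exists>NSC. k \<ge> 1 \<longrightarrow> Q k N0 (fst NSC) (fst (snd NSC)) (snd (snd NSC))" by force
  then have "\<exists>f. \<forall>k N0. k \<ge> 1 \<longrightarrow> Q k N0 (fst (f k N0)) (fst (snd (f k N0))) (snd (snd (f k N0)))"
    by (subst choice_iff[symmetric], intro allI, subst choice_iff[symmetric]) blast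
  then obtain f where f: "\<And>k N0. k \<ge> 1 \<Longrightarrow> Q k N0 (fst (f k N0)) (fst (snd (f k N0))) (snd (snd (f k N0)))" by blast
  define Nf where "Nf k N0 = fst (f k N0)" for k N0
  define Sf where "Sf k N0 = fst (snd (f k N0))" for k N0
  define Cf where "Cf k N0 = snd (snd (f k N0))" for k N0
  have NSC: "Nf k N0 \<ge> N0 \<and> Nf k N0 \<ge> 1 \<and> finite (Sf k N0) \<and> Sf k N0 \<noteq> {} \<and> Sf k N0 \<subseteq> {1..} \<and>
     (\<forall>j\<in>Sf k N0. Cf k N0 j \<noteq> 0) \<and>
     real (card {n \<in> {1..Nf k N0}. (\<Sum>j\<in>Sf k N0. cmod (Cf k N0 j) * v (n + j)) / (\<Sum>j\<in>Sf k N0. cmod (Cf k N0 j) * v j) \<ge> real k}) \<ge> real (Nf k N0) * (1/2)"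
    if "k \<ge> 1" for k N0
    using f[OF that, of N0] unfolding Q_def Nf_def Sf_def Cf_def by blast
  define Ns where "Ns = rec_nat 0 (\<lambda>k prev. Nf (Suc k) (prev + 1))"
  have Ns0: "Ns 0 = 0" and NsS: "\<And>k. Ns (Suc k) = Nf (Suc k) (Ns k + 1)" by (simp_all add: Ns_def)
  define Sq where "Sq k = Sf k (Ns (k - 1) + 1)" for k
  define Cq where "Cq k = Cf k (Ns (k - 1) + 1)" for k
  have key: "Ns k \<ge> Ns (k - 1) + 1 \<and> Ns k \<ge> 1 \<and> finite (Sq k) \<and> Sq k \<noteq> {} \<and> Sq k \<subseteq> {1..} \<and>
     (\<forall>j\<in>Sq k. Cq k j \<noteq> 0) \<and>
     real (card {n \<in> {1..Ns k}. (\<Sum>j\<in>Sq k. cmod (Cq k j) * v (n + j)) / (\<Sum>j\<in>Sq k. cmod (Cq k j) * v j) \<ge> real k}) \<ge> real (Ns k) * (1/2)"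
    if k1: "k \<ge> 1" for k
  proof -
    obtain k' where k': "k = Suc k'" using k1 by (cases k) auto
    show ?thesis using NSC[of k "Ns k' + 1"] NsS[of k'] k' unfolding Sq_def Cq_def by simp
  qed
  have partII: "\<exists>\<epsilon>>0. \<exists>N :: nat \<Rightarrow> nat. \<exists>C :: nat \<Rightarrow> nat \<Rightarrow> complex.
                     N 1 \<ge> 1 \<and> (\<forall>k\<ge>1. N k < N (k + 1))
                   \<and> (\<forall>k\<ge>1. \<forall>j\<in>Sq k. C k j \<noteq> 0)
                   \<and> (\<forall>k\<ge>1. real (card {n \<in> {1..N k}.
                          (\<Sum>j\<in>Sq k. cmod (C k j) * v (n + j)) / (\<Sum>j\<in>Sq k. cmod (C k j) * v j)
                            \<ge> real k}) \<ge> real (N k) * \<epsilon>)"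
  proof (intro exI[of _ "1/2"] exI[of _ Ns] exI[of _ Cq] conjI allI impI)
    show "(0::real) < 1/2" by simp
    show "Ns 1 \<ge> 1" using key[of 1] by simp
    fix k :: nat assume k: "k \<ge> 1"
    show "Ns k < Ns (k + 1)" using key[of "k + 1"] by simp
  next
    fix k :: nat assume k: "k \<ge> 1"
    show "\<forall>j\<in>Sq k. Cq k j \<noteq> 0" using key[OF k] by simp
  next
    fix k :: nat assume k: "k \<ge> 1"
    show "real (card {n \<in> {1..Ns k}. (\<Sum>j\<in>Sq k. cmod (Cq k j) * v (n + j)) / (\<Sum>j\<in>Sq k. cmod (Cq k j) * v j) \<ge> real k}) \<ge> real (Ns k) * (1/2)"
      using key[OF k] by simp
  qed
  have "\<forall>k\<ge>1. finite (Sq k) \<and> Sq k \<noteq> {} \<and> Sq k \<subseteq> {1..}" using key by simp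
  then show ?thesis unfolding condC_def using partI partII by blast
qed

end


locale cdata = wsetup +
  fixes S :: "nat \<Rightarrow> nat set" and A :: "nat set" and \<epsilon> :: real
    and N :: "nat \<Rightarrow> nat" and C :: "nat \<Rightarrow> nat \<Rightarrow> complex"
  assumes S: "\<And>k. k \<ge> 1 \<Longrightarrow> finite (S k) \<and> S k \<noteq> {} \<and> S k \<subseteq> {1..}"
    and A: "A \<subseteq> {1..}" "upper_dens A = 1" "\<And>e. e > 0 \<Longrightarrow> \<exists>n0. \<forall>n\<in>A. n \<ge> n0 \<longrightarrow> v n < e"
    and eps: "\<epsilon> > 0"
    and N1: "N 1 \<ge> 1" and Ninc: "\<And>k. k \<ge> 1 \<Longrightarrow> N k < N (k + 1)"
    and Cne: "\<And>k j. k \<ge> 1 \<Longrightarrow> j \<in> S k \<Longrightarrow> C k j \<noteq> 0"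
    and big: "\<And>k. k \<ge> 1 \<Longrightarrow> real (card {n \<in> {1..N k}.
                          (\<Sum>j\<in>S k. cmod (C k j) * v (n + j)) / (\<Sum>j\<in>S k. cmod (C k j) * v j)
                            \<ge> real k}) \<ge> real (N k) * \<epsilon>"
begin

definition FF :: "nat \<Rightarrow> nat \<Rightarrow> real" where
  "FF k t = (\<Sum>j\<in>S k. cmod (C k j) * v (t + j))"

lemma FF_pos: "k \<ge> 1 \<Longrightarrow> FF k t > 0"
  unfolding FF_def
proof (rule sum_pos)
  assume k: "k \<ge> 1"
  show "finite (S k)" "S k \<noteq> {}" using S[OF k] by auto
  fix j assume j: "j \<in> S k"
  then have "j \<ge> 1" using S[OF k] by auto
  then show "cmod (C k j) * v (t + j) > 0" using Cne[OF k j] vpos[of "t + j"] by auto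
qed

lemma FF_M: "k \<ge> 1 \<Longrightarrow> FF k (Suc t) \<le> M * FF k t"
  unfolding FF_def
proof -
  assume k: "k \<ge> 1"
  have "(\<Sum>j\<in>S k. cmod (C k j) * v (Suc t + j)) \<le> (\<Sum>j\<in>S k. M * (cmod (C k j) * v (t + j)))"
  proof (rule sum_mono)
    fix j assume j: "j \<in> S k"
    then have "t + j \<ge> 1" using S[OF k] by auto
    then have "v ((t + j) + 1) \<le> M * v (t + j)" by (rule Mb)
    then have "cmod (C k j) * v (Suc t + j) \<le> cmod (C k j) * (M * v (t + j))"
      by (intro mult_left_mono) auto
    then show "cmod (C k j) * v (Suc t + j) \<le> M * (cmod (C k j) * v (t + j))" by (simp add: algebra_simps)
  qed
  then show "(\<Sum>j\<in>S k. cmod (C k j) * v (Suc t + j)) \<le> M * (\<Sum>j\<in>S k. cmod (C k j) * v (t + j))"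
    by (simp add: sum_distrib_left)
qed

lemma FF_Mpow: "k \<ge> 1 \<Longrightarrow> FF k (t + d) \<le> M ^ d * FF k t"
proof (induction d)
  case 0 then show ?case by simp
next
  case (Suc d)
  have "FF k (t + Suc d) \<le> M * FF k (t + d)" using FF_M[OF Suc.prems, of "t + d"] by simp
  also have "\<dots> \<le> M * (M ^ d * FF k t)" using Suc M1 by (intro mult_left_mono) auto
  finally show ?case by (simp add: algebra_simps)
qed

lemma N_ge: "k \<ge> 1 \<Longrightarrow> N k \<ge> k"
proof (induction k rule: dec_induct[of 1])
  case base then show ?case using N1 by simp
next
  case (step k) then show ?case using Ninc[of k] by simp
qed

lemma vec_lemma:
  assumes K': "K' > 0" and eta: "0 < \<eta>" "\<eta> < 1"
  shows "\<exists>k s L. k \<ge> 1 \<and> s \<ge> B \<and> L \<ge> R0 \<and> real (card {n \<in> {1..L}. FF k (s + n) \<ge> K' * FF k s}) \<ge> (1 - \<eta>) * real L"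
proof -
  define K where "K = max K' (max (M ^ R0) 2)"
  have K1: "K > 1" and KM: "K \<ge> M ^ R0" and KK': "K \<ge> K'" unfolding K_def by auto
  obtain I where I: "(1 - \<eta>) ^ I < \<epsilon> / 2" using real_arch_pow_inv[of "\<epsilon> / 2" "1 - \<eta>"] eps eta by auto
  define k where "k = max (B + 1) (nat \<lceil>max (M ^ B * K ^ (I + 1)) (2 * real B / \<epsilon>)\<rceil>)"
  have k1: "k \<ge> 1" and kB: "k \<ge> B + 1" unfolding k_def by auto
  have kK: "real k \<ge> M ^ B * K ^ (I + 1)" and kB2: "real k \<ge> 2 * real B / \<epsilon>" unfolding k_def by linarith+
  have Nk: "N k \<ge> k" using N_ge[OF k1] .
  define F where "F = FF k"
  have Fpos: "\<And>t. F t > 0" unfolding F_def using FF_pos[OF k1] .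
  have FM: "\<And>t. F (Suc t) \<le> M * F t" unfolding F_def using FF_M[OF k1] .
  have FB: "F B \<le> M ^ B * F 0" unfolding F_def using FF_Mpow[OF k1, of 0 B] by simp
  define E where "E = {n \<in> {1..N k}. F n / F 0 \<ge> real k}"
  have cE: "real (card E) \<ge> real (N k) * \<epsilon>" using big[OF k1] unfolding E_def F_def FF_def by simp
  define N' where "N' = N k - B"
  have N'pos: "N' > 0" using Nk kB unfolding N'_def by auto
  define E' where "E' = {n \<in> {1..N'}. F (B + n) \<ge> F B * K ^ (I + 1)}"
  have "(\<lambda>n. n - B) ` (E \<inter> {B<..N k}) \<subseteq> E'"
  proof
    fix n' assume "n' \<in> (\<lambda>n. n - B) ` (E \<inter> {B<..N k})"
    then obtain n where n: "n' = n - B" "n \<in> E" "B < n" "n \<le> N k" by auto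
    have "F n \<ge> real k * F 0" using n(2) Fpos[of 0] unfolding E_def by (auto simp: le_divide_eq)
    moreover have "real k * F 0 \<ge> M ^ B * K ^ (I + 1) * F 0" using kK Fpos[of 0] by (intro mult_right_mono) auto
    moreover have "M ^ B * K ^ (I + 1) * F 0 \<ge> F B * K ^ (I + 1)"
      using FB K1 by (simp add: mult.commute mult.left_commute mult_left_mono)
    moreover have "B + n' = n" using n by auto
    ultimately show "n' \<in> E'" unfolding E'_def N'_def using n by auto
  qed
  moreover have "inj_on (\<lambda>n. n - B) (E \<inter> {B<..N k})" by (auto simp: inj_on_def)
  moreover have "finite E'" unfolding E'_def by auto
  ultimately have "card (E \<inter> {B<..N k}) \<le> card E'" by (metis card_image card_mono)
  moreover have "real (card (E \<inter> {B<..N k})) \<ge> real (card (E \<inter> {1..N k})) - real B" by (rule card_lo)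
  moreover have "real (card (E \<inter> {1..N k})) = real (card E)" unfolding E_def by (metis (no_types, lifting) Int_absorb2 mem_Collect_eq subsetI)
  moreover have "real B \<le> real (N k) * \<epsilon> / 2"
  proof -
    have "real (N k) \<ge> 2 * real B / \<epsilon>" using Nk kB2 by linarith
    then show ?thesis using eps by (auto simp: field_simps)
  qed
  ultimately have cE': "real (card E') \<ge> real (N k) * \<epsilon> / 2" using cE by linarith
  have "(1 - \<eta>) ^ I * real N' < \<epsilon> / 2 * real N'" using I N'pos by (intro mult_strict_right_mono) auto
  also have "\<dots> \<le> real (N k) * \<epsilon> / 2" unfolding N'_def using eps by (auto simp: field_simps)
  finally have bigE': "real (card {n \<in> {1..N'}. F (B + n) \<ge> F B * K ^ (I + 1)}) > (1 - \<eta>) ^ I * real N'"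
    using cE' unfolding E'_def by linarith
  obtain s L where sL: "s \<ge> B" "L \<ge> R0" "real (card {n \<in> {1..L}. F (s + n) \<ge> K * F s}) \<ge> (1 - \<eta>) * real L"
    using run_lemma[where F=F and M=M and K=K and \<eta>=\<eta> and R=R0 and b=B and I=I and N=N', OF Fpos FM M1 K1 KM eta bigE'] by blast
  have "{n \<in> {1..L}. F (s + n) \<ge> K * F s} \<subseteq> {n \<in> {1..L}. F (s + n) \<ge> K' * F s}"
  proof safe
    fix n assume "K * F s \<le> F (s + n)"
    moreover have "K' * F s \<le> K * F s" using KK' Fpos[of s] by (intro mult_right_mono) auto
    ultimately show "K' * F s \<le> F (s + n)" by linarith
  qed
  then have "card {n \<in> {1..L}. F (s + n) \<ge> K * F s} \<le> card {n \<in> {1..L}. F (s + n) \<ge> K' * F s}"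
    by (intro card_mono) auto
  then show ?thesis using sL k1 unfolding F_def by (intro exI[of _ k] exI[of _ s] exI[of _ L]) auto
qed

end


context cdata
begin

definition aa :: "nat \<Rightarrow> nat \<Rightarrow> real" where
  "aa i P = 1 / (2 ^ (i + 1) * M ^ P)"

lemma aa_pos: "aa i P > 0"
  unfolding aa_def using M1 by auto

definition goodblk :: "nat \<Rightarrow> nat \<Rightarrow> nat \<Rightarrow> nat \<times> nat \<times> nat \<Rightarrow> bool" where
  "goodblk i P Bd ksl \<longleftrightarrow> fst ksl \<ge> 1 \<and> fst (snd ksl) \<ge> Bd \<and> snd (snd ksl) \<ge> i + 1 \<and>
     real (card {n \<in> {1..snd (snd ksl)}. FF (fst ksl) (fst (snd ksl) + n) \<ge> (real (i + 1) / aa i P) * FF (fst ksl) (fst (snd ksl))})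
       \<ge> (1 - 1 / real (i + 2)) * real (snd (snd ksl))"

definition blkdata :: "nat \<Rightarrow> nat \<Rightarrow> nat \<Rightarrow> nat \<times> nat \<times> nat" where
  "blkdata i P Bd = (SOME ksl. goodblk i P Bd ksl)"

lemma blkdata_good: "goodblk i P Bd (blkdata i P Bd)"
proof -
  have K': "real (i + 1) / aa i P > 0" using aa_pos by auto
  have eta: "0 < 1 / real (i + 2)" "1 / real (i + 2) < 1" by auto
  obtain k s L where "k \<ge> 1 \<and> s \<ge> Bd \<and> L \<ge> i + 1 \<and> real (card {n \<in> {1..L}. FF k (s + n) \<ge> (real (i + 1) / aa i P) * FF k s}) \<ge> (1 - 1 / real (i + 2)) * real L"
    using vec_lemma[OF K' eta, of Bd "i + 1"] by blast
  then have "goodblk i P Bd (k, s, L)" unfolding goodblk_def by simp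
  then show ?thesis unfolding blkdata_def by (rule someI)
qed

definition blkf :: "nat \<Rightarrow> nat \<Rightarrow> real \<Rightarrow> nat \<Rightarrow> real" where
  "blkf k s a m = (if s < m \<and> m - s \<in> S k then a * cmod (C k (m - s)) / FF k s else 0)"

definition Gs :: "(nat \<Rightarrow> real) \<Rightarrow> nat \<Rightarrow> nat \<Rightarrow> real" where
  "Gs prof Bd j = (\<Sum>m\<in>{1..Bd}. prof m * v (m + j))"

definition goodP :: "nat \<Rightarrow> nat \<Rightarrow> (nat \<Rightarrow> real) \<Rightarrow> nat \<Rightarrow> nat \<Rightarrow> bool" where
  "goodP i P prof Bd P' \<longleftrightarrow> P' \<ge> P + 1 \<and> P' \<ge> i + 1 \<and>
     real (card {j \<in> {1..P'}. j \<in> A \<and> Gs prof Bd j < 1 / real (i + 1)}) \<ge> (1 - 1 / real (i + 1)) * real P'"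

definition nextP :: "nat \<Rightarrow> nat \<Rightarrow> (nat \<Rightarrow> real) \<Rightarrow> nat \<Rightarrow> nat" where
  "nextP i P prof Bd = (SOME P'. goodP i P prof Bd P')"

lemma A_dens1: "dens1 A" using A(2) by (rule upper_dens_imp_dens1)

lemma nextP_good:
  assumes nn: "\<And>m. prof m \<ge> 0"
  shows "goodP i P prof Bd (nextP i P prof Bd)"
proof -
  define c where "c = (\<Sum>m\<in>{1..Bd}. prof m * M ^ m)"
  have c0: "c \<ge> 0" unfolding c_def using nn M1 by (intro sum_nonneg) auto
  define e where "e = 1 / (real (i + 1) * (c + 1))"
  have e: "e > 0" using c0 unfolding e_def by auto
  obtain n0 where n0: "\<And>n. n \<in> A \<Longrightarrow> n \<ge> n0 \<Longrightarrow> v n < e" using A(3)[OF e] by blast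
  have sub: "{n \<in> A. n \<ge> max n0 1} \<subseteq> {j. j \<in> A \<and> Gs prof Bd j < 1 / real (i + 1)}"
  proof safe
    fix j assume j: "j \<in> A" "max n0 1 \<le> j"
    have "Gs prof Bd j \<le> (\<Sum>m\<in>{1..Bd}. prof m * (M ^ m * v j))"
      unfolding Gs_def
    proof (rule sum_mono)
      fix m assume "m \<in> {1..Bd}"
      have "v (j + m) \<le> M ^ m * v j" using v_growth j by auto
      then show "prof m * v (m + j) \<le> prof m * (M ^ m * v j)" using nn[of m] by (intro mult_left_mono) (auto simp: add.commute)
    qed
    also have "\<dots> = c * v j" unfolding c_def by (subst sum_distrib_right) (simp add: algebra_simps)
    also have "\<dots> \<le> c * e" using n0[of j] j c0 by (intro mult_left_mono) auto
    also have "c * e = c / (c + 1) * (1 / real (i + 1))" unfolding e_def by (simp add: field_simps)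
    also have "c / (c + 1) * (1 / real (i + 1)) < 1 * (1 / real (i + 1))"
      using c0 by (intro mult_strict_right_mono) auto
    finally show "Gs prof Bd j < 1 / real (i + 1)" by simp
  qed
  have "dens1 {j. j \<in> A \<and> Gs prof Bd j < 1 / real (i + 1)}"
    using dens1_mono[OF dens1_tail[OF A_dens1] sub] .
  moreover have "1 / real (i + 1) > 0" by simp
  ultimately obtain P' where P': "P' \<ge> max (P + 1) (i + 1)" "real (card ({j. j \<in> A \<and> Gs prof Bd j < 1 / real (i + 1)} \<inter> {1..P'})) \<ge> (1 - 1 / real (i + 1)) * real P'"
    unfolding dens1_def by blast
  have "{j. j \<in> A \<and> Gs prof Bd j < 1 / real (i + 1)} \<inter> {1..P'} = {j \<in> {1..P'}. j \<in> A \<and> Gs prof Bd j < 1 / real (i + 1)}" by auto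
  moreover have "P' \<ge> P + 1" "P' \<ge> i + 1" using P'(1) by auto
  ultimately have "goodP i P prof Bd P'" unfolding goodP_def using P'(2) by (simp only:)
  then show ?thesis unfolding nextP_def by (rule someI)
qed

definition step :: "nat \<Rightarrow> nat \<times> nat \<times> (nat \<Rightarrow> real) \<Rightarrow> nat \<times> nat \<times> (nat \<Rightarrow> real)" where
  "step i st = (let P = fst st; Bd = fst (snd st); prof = snd (snd st); b = blkdata i P Bd;
      k = fst b; s = fst (snd b); prof' = (\<lambda>m. prof m + blkf k s (aa i P) m); Bd' = s + Max (S k)
     in (nextP i P prof' Bd', Bd', prof'))"

definition st :: "nat \<Rightarrow> nat \<times> nat \<times> (nat \<Rightarrow> real)" where
  "st = rec_nat (0, 0, \<lambda>m. 0) step"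

definition "Pst i = fst (st i)"
definition "Bst i = fst (snd (st i))"
definition "prf i = snd (snd (st i))"
definition "kk i = fst (blkdata i (Pst i) (Bst i))"
definition "ss i = fst (snd (blkdata i (Pst i) (Bst i)))"
definition "LL i = snd (snd (blkdata i (Pst i) (Bst i)))"
definition "ai i = aa i (Pst i)"
definition "blk i = blkf (kk i) (ss i) (ai i)"

lemma st0: "Pst 0 = 0" "Bst 0 = 0" "prf 0 = (\<lambda>m. 0)"
  by (simp_all add: Pst_def Bst_def prf_def st_def)

lemma stS: "prf (Suc i) = (\<lambda>m. prf i m + blk i m)" "Bst (Suc i) = ss i + Max (S (kk i))"
  "Pst (Suc i) = nextP i (Pst i) (prf (Suc i)) (Bst (Suc i))"
  by (simp_all add: Pst_def Bst_def prf_def st_def step_def Let_def kk_def ss_def blk_def ai_def)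

lemma blk_good: "kk i \<ge> 1" "ss i \<ge> Bst i" "LL i \<ge> i + 1"
  "real (card {n \<in> {1..LL i}. FF (kk i) (ss i + n) \<ge> (real (i + 1) / ai i) * FF (kk i) (ss i)}) \<ge> (1 - 1 / real (i + 2)) * real (LL i)"
  using blkdata_good[of i "Pst i" "Bst i"] unfolding goodblk_def kk_def ss_def LL_def ai_def by auto

lemma blk_nonneg: "blk i m \<ge> 0"
  unfolding blk_def blkf_def ai_def using aa_pos[of i "Pst i"] FF_pos[OF blk_good(1)[of i], of "ss i"]
  by (auto intro!: divide_nonneg_pos)

lemma Smax: "j \<in> S (kk i) \<Longrightarrow> j \<le> Max (S (kk i))" "Max (S (kk i)) \<ge> 1"
proof -
  have f: "finite (S (kk i))" "S (kk i) \<noteq> {}" "S (kk i) \<subseteq> {1..}" using S[OF blk_good(1)] by auto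
  show "j \<in> S (kk i) \<Longrightarrow> j \<le> Max (S (kk i))" using f by auto
  obtain j0 where "j0 \<in> S (kk i)" using f by auto
  then show "Max (S (kk i)) \<ge> 1" using f by (meson Max_ge atLeast_iff order_trans subsetD)
qed

lemma blk_supp: "blk i m \<noteq> 0 \<Longrightarrow> ss i < m \<and> m \<le> Bst (Suc i)"
proof -
  assume "blk i m \<noteq> 0"
  then have m: "ss i < m" "m - ss i \<in> S (kk i)" unfolding blk_def blkf_def by (auto split: if_splits)
  have "m - ss i \<le> Max (S (kk i))" by (rule Smax(1)[OF m(2)])
  then show ?thesis using m stS(2) by auto
qed

lemma inv: "(\<forall>m. prf i m \<ge> 0) \<and> (\<forall>m. (m = 0 \<or> m > Bst i) \<longrightarrow> prf i m = 0) \<and> Bst i \<ge> i"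
proof (induction i)
  case 0 then show ?case by (simp add: st0)
next
  case (Suc i)
  have B: "Bst (Suc i) \<ge> Bst i + 1" using stS(2) blk_good(2)[of i] Smax(2)[of i] by simp
  show ?case
  proof (intro conjI allI impI)
    fix m show "prf (Suc i) m \<ge> 0" using Suc blk_nonneg[of i m] by (simp add: stS)
  next
    fix m assume m: "m = 0 \<or> m > Bst (Suc i)"
    have "blk i m = 0" by (cases "blk i m = 0") (use blk_supp[of i m] m in auto)
    moreover have "prf i m = 0" using Suc m B by auto
    ultimately show "prf (Suc i) m = 0" by (simp add: stS)
  next
    show "Bst (Suc i) \<ge> Suc i" using Suc B by simp
  qed
qed

lemma prf_nonneg: "prf i m \<ge> 0" using inv by blast
lemma prf_supp: "m = 0 \<or> m > Bst i \<Longrightarrow> prf i m = 0" using inv by blast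
lemma Bst_ge: "Bst i \<ge> i" using inv by blast
lemma Bst_Suc: "Bst (Suc i) \<ge> Bst i + 1" using stS(2) blk_good(2)[of i] Smax(2)[of i] by simp
lemma Bst_mono: "i \<le> j \<Longrightarrow> Bst i \<le> Bst j"
proof -
  have "Bst n \<le> Bst (Suc n)" for n using Bst_Suc[of n] by linarith
  then have "incseq Bst" by (rule incseq_SucI)
  then show "i \<le> j \<Longrightarrow> Bst i \<le> Bst j" by (rule incseqD)
qed

lemma Pst_good: "goodP i (Pst i) (prf (Suc i)) (Bst (Suc i)) (Pst (Suc i))"
  unfolding stS(3) by (rule nextP_good) (rule prf_nonneg)

lemma Pst_Suc: "Pst (Suc i) \<ge> Pst i + 1" "Pst (Suc i) \<ge> i + 1"
  using Pst_good[of i] unfolding goodP_def by auto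

lemma Pst_mono: "i \<le> j \<Longrightarrow> Pst i \<le> Pst j"
proof -
  have "Pst n \<le> Pst (Suc n)" for n using Pst_Suc(1)[of n] by linarith
  then have "incseq Pst" by (rule incseq_SucI)
  then show "i \<le> j \<Longrightarrow> Pst i \<le> Pst j" by (rule incseqD)
qed

end


lemma geom_half: "(\<Sum>i'\<in>{i..<T}. 1 / 2 ^ (i' + 1) :: real) \<le> 1 / 2 ^ i - 1 / 2 ^ T" if "i \<le> T"
  using that
proof (induction T rule: dec_induct)
  case base then show ?case by simp
next
  case (step T)
  have "(\<Sum>i'\<in>{i..<Suc T}. 1 / 2 ^ (i' + 1) :: real) = (\<Sum>i'\<in>{i..<T}. 1 / 2 ^ (i' + 1)) + 1 / 2 ^ (T + 1)"
    using step by simp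
  also have "\<dots> \<le> 1 / 2 ^ i - 1 / 2 ^ T + 1 / 2 ^ (T + 1)" using step by simp
  also have "\<dots> = 1 / 2 ^ i - 1 / 2 ^ Suc T" by (simp add: field_simps)
  finally show ?case .
qed

context cdata
begin

definition "SP i = (\<lambda>j. ss i + j) ` S (kk i)"
definition "bs i n = ai i * FF (kk i) (ss i + n) / FF (kk i) (ss i)"

lemma SP_fin: "finite (SP i)" unfolding SP_def using S[OF blk_good(1)] by auto

lemma SP_supp: "blk i m \<noteq> 0 \<Longrightarrow> m \<in> SP i"
  unfolding blk_def blkf_def SP_def by (auto split: if_splits intro!: image_eqI[of _ _ "m - ss i"])

lemma SP_range: "m \<in> SP i \<Longrightarrow> ss i < m \<and> m \<le> Bst (Suc i)"
proof -
  assume "m \<in> SP i"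
  then obtain j where j: "j \<in> S (kk i)" "m = ss i + j" unfolding SP_def by auto
  have "j \<ge> 1" using j S[OF blk_good(1)] by auto
  moreover have "j \<le> Max (S (kk i))" using Smax(1)[OF j(1)] .
  ultimately show ?thesis using j stS(2) by auto
qed

lemma blk_sum_SP: "(\<Sum>m\<in>SP i. blk i m * v (m + n)) = bs i n"
proof -
  have inj: "inj_on (\<lambda>j. ss i + j) (S (kk i))" by (auto simp: inj_on_def)
  have "(\<Sum>m\<in>SP i. blk i m * v (m + n)) = (\<Sum>j\<in>S (kk i). blk i (ss i + j) * v (ss i + j + n))"
    unfolding SP_def by (subst sum.reindex[OF inj]) simp
  also have "\<dots> = (\<Sum>j\<in>S (kk i). ai i / FF (kk i) (ss i) * (cmod (C (kk i) j) * v (ss i + n + j)))"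
  proof (rule sum.cong)
    fix j assume j: "j \<in> S (kk i)"
    then have "j \<ge> 1" using S[OF blk_good(1)] by auto
    then show "blk i (ss i + j) * v (ss i + j + n) = ai i / FF (kk i) (ss i) * (cmod (C (kk i) j) * v (ss i + n + j))"
      using j unfolding blk_def blkf_def by (simp add: algebra_simps)
  qed simp
  also have "\<dots> = bs i n" unfolding bs_def FF_def by (simp add: sum_distrib_left sum_divide_distrib)
  finally show ?thesis .
qed

lemma blk_term_nonneg: "blk i m * v (m + n) \<ge> 0"
proof (cases "blk i m = 0")
  case False
  then have "m \<ge> 1" using SP_range[OF SP_supp[OF False]] by auto
  then show ?thesis using blk_nonneg[of i m] vpos[of "m + n"] by auto
qed simp

lemma blk_sum_le: "finite W \<Longrightarrow> (\<Sum>m\<in>W. blk i m * v (m + n)) \<le> bs i n"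
proof -
  assume W: "finite W"
  have "(\<Sum>m\<in>W. blk i m * v (m + n)) = (\<Sum>m\<in>W \<inter> SP i. blk i m * v (m + n))"
    using W SP_supp by (intro sum.mono_neutral_right) auto
  also have "\<dots> \<le> (\<Sum>m\<in>SP i. blk i m * v (m + n))"
    using SP_fin blk_term_nonneg by (intro sum_mono2) auto
  finally show ?thesis using blk_sum_SP by simp
qed

lemma bs_le: "n \<le> Pst i \<Longrightarrow> bs i n \<le> 1 / 2 ^ (i + 1)"
proof -
  assume n: "n \<le> Pst i"
  have F: "FF (kk i) (ss i) > 0" using FF_pos[OF blk_good(1)] .
  have "FF (kk i) (ss i + n) \<le> M ^ n * FF (kk i) (ss i)" using FF_Mpow[OF blk_good(1)] .
  also have "\<dots> \<le> M ^ Pst i * FF (kk i) (ss i)" using M1 n F by (intro mult_right_mono power_increasing) auto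
  finally have "bs i n \<le> ai i * (M ^ Pst i * FF (kk i) (ss i)) / FF (kk i) (ss i)"
    unfolding bs_def using aa_pos[of i "Pst i"] F by (intro divide_right_mono mult_left_mono) (auto simp: ai_def)
  also have "\<dots> = 1 / 2 ^ (i + 1)" unfolding ai_def aa_def using F M1 by (simp add: field_simps)
  finally show ?thesis .
qed

lemma bs_large: "real (card {n \<in> {1..LL i}. bs i n \<ge> real (i + 1)}) \<ge> (1 - 1 / real (i + 2)) * real (LL i)"
proof -
  have F: "FF (kk i) (ss i) > 0" using FF_pos[OF blk_good(1)] .
  have "{n \<in> {1..LL i}. FF (kk i) (ss i + n) \<ge> (real (i + 1) / ai i) * FF (kk i) (ss i)} \<subseteq> {n \<in> {1..LL i}. bs i n \<ge> real (i + 1)}"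
  proof safe
    fix n assume h: "real (i + 1) / ai i * FF (kk i) (ss i) \<le> FF (kk i) (ss i + n)"
    have a: "ai i > 0" unfolding ai_def by (rule aa_pos)
    from h have "real (i + 1) * FF (kk i) (ss i) \<le> ai i * FF (kk i) (ss i + n)"
      using a by (simp add: field_simps)
    then show "real (i + 1) \<le> bs i n" unfolding bs_def using F by (simp add: field_simps)
  qed
  then have "card {n \<in> {1..LL i}. FF (kk i) (ss i + n) \<ge> (real (i + 1) / ai i) * FF (kk i) (ss i)} \<le> card {n \<in> {1..LL i}. bs i n \<ge> real (i + 1)}"
    by (intro card_mono) auto
  then show ?thesis using blk_good(4)[of i] by linarith
qed

lemma prf_decomp: "i \<le> T \<Longrightarrow> prf T m = prf i m + (\<Sum>i'\<in>{i..<T}. blk i' m)"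
  by (induction T rule: dec_induct) (auto simp: stS)

lemma blk_zero_late: "Bst T \<ge> m \<Longrightarrow> T \<le> i' \<Longrightarrow> blk i' m = 0"
proof (rule ccontr)
  assume h: "Bst T \<ge> m" "T \<le> i'" "blk i' m \<noteq> 0"
  then have "ss i' < m" using SP_range[OF SP_supp] by blast
  moreover have "ss i' \<ge> Bst i'" by (rule blk_good(2))
  moreover have "Bst i' \<ge> Bst T" using Bst_mono h by auto
  ultimately show False using h by auto
qed

definition "DD m = prf m m"

lemma DD_eq: "Bst T \<ge> m \<Longrightarrow> DD m = prf T m"
proof -
  assume h: "Bst T \<ge> m"
  define T' where "T' = max T m"
  have "prf T' m = prf T m + (\<Sum>i'\<in>{T..<T'}. blk i' m)" using prf_decomp[of T T'] unfolding T'_def by auto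
  also have "(\<Sum>i'\<in>{T..<T'}. blk i' m) = 0" using blk_zero_late[OF h] by auto
  finally have 1: "prf T' m = prf T m" by simp
  have hm: "Bst m \<ge> m" by (rule Bst_ge)
  have "prf T' m = prf m m + (\<Sum>i'\<in>{m..<T'}. blk i' m)" using prf_decomp[of m T'] unfolding T'_def by auto
  also have "(\<Sum>i'\<in>{m..<T'}. blk i' m) = 0" using blk_zero_late[OF hm] by auto
  finally have 2: "prf T' m = prf m m" by simp
  show ?thesis using 1 2 unfolding DD_def by simp
qed

lemma DD_nonneg: "DD m \<ge> 0" unfolding DD_def by (rule prf_nonneg)
lemma DD_0: "DD 0 = 0" unfolding DD_def using prf_supp by auto

lemma DD_block: "m \<in> SP i \<Longrightarrow> DD m = blk i m"
proof -
  assume m: "m \<in> SP i"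
  then have r: "ss i < m" "m \<le> Bst (Suc i)" using SP_range by auto
  have "DD m = prf (Suc i) m" using DD_eq r by auto
  also have "\<dots> = prf i m + blk i m" by (simp add: stS)
  also have "prf i m = 0" using prf_supp[of m i] r blk_good(2)[of i] by auto
  finally show ?thesis by simp
qed

lemma Pst_ge: "Pst i \<ge> i"
  by (cases i) (use Pst_Suc st0 in auto)

lemma partial_bound:
  assumes j: "j \<le> Pst i"
  shows "(\<Sum>m<Q. DD m * v (m + j)) \<le> Gs (prf i) (Bst i) j + 1 / 2 ^ i"
proof -
  define T where "T = max Q i"
  have eq: "DD m = prf T m" if "m < Q" for m
    using DD_eq[of m T] Bst_ge[of T] that unfolding T_def by auto
  have "(\<Sum>m<Q. DD m * v (m + j)) = (\<Sum>m<Q. (prf i m + (\<Sum>i'\<in>{i..<T}. blk i' m)) * v (m + j))"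
    using eq prf_decomp[of i T] unfolding T_def by (intro sum.cong) auto
  also have "\<dots> = (\<Sum>m<Q. prf i m * v (m + j)) + (\<Sum>m<Q. (\<Sum>i'\<in>{i..<T}. blk i' m) * v (m + j))"
    by (simp add: distrib_right sum.distrib)
  also have "(\<Sum>m<Q. (\<Sum>i'\<in>{i..<T}. blk i' m) * v (m + j)) = (\<Sum>i'\<in>{i..<T}. \<Sum>m<Q. blk i' m * v (m + j))"
    by (subst sum.swap) (simp add: sum_distrib_right)
  finally have eqQ: "(\<Sum>m<Q. DD m * v (m + j)) = (\<Sum>m<Q. prf i m * v (m + j)) + (\<Sum>i'\<in>{i..<T}. \<Sum>m<Q. blk i' m * v (m + j))" .
  have b1: "(\<Sum>m<Q. prf i m * v (m + j)) \<le> Gs (prf i) (Bst i) j"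
  proof -
    have "(\<Sum>m<Q. prf i m * v (m + j)) = (\<Sum>m\<in>{..<Q} \<inter> {1..Bst i}. prf i m * v (m + j))"
    proof (intro sum.mono_neutral_right)
      show "\<forall>m\<in>{..<Q} - {..<Q} \<inter> {1..Bst i}. prf i m * v (m + j) = 0"
      proof
        fix m assume "m \<in> {..<Q} - {..<Q} \<inter> {1..Bst i}"
        then have "m = 0 \<or> m > Bst i" by auto
        then show "prf i m * v (m + j) = 0" using prf_supp by simp
      qed
    qed auto
    also have "\<dots> \<le> (\<Sum>m\<in>{1..Bst i}. prf i m * v (m + j))"
    proof (rule sum_mono2)
      fix m assume "m \<in> {1..Bst i} - {..<Q} \<inter> {1..Bst i}"
      then have "m \<ge> 1" by auto
      then show "0 \<le> prf i m * v (m + j)" using prf_nonneg[of i m] vpos[of "m + j"] by auto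
    qed auto
    finally show ?thesis unfolding Gs_def .
  qed
  have b2: "(\<Sum>i'\<in>{i..<T}. \<Sum>m<Q. blk i' m * v (m + j)) \<le> (\<Sum>i'\<in>{i..<T}. 1 / 2 ^ (i' + 1))"
  proof (rule sum_mono)
    fix i' assume i': "i' \<in> {i..<T}"
    have "j \<le> Pst i'" using j Pst_mono[of i i'] i' by auto
    then show "(\<Sum>m<Q. blk i' m * v (m + j)) \<le> 1 / 2 ^ (i' + 1)"
      using blk_sum_le[of "{..<Q}" i' j] bs_le[of j i'] by auto
  qed
  have b3: "(\<Sum>i'\<in>{i..<T}. 1 / 2 ^ (i' + 1) :: real) \<le> 1 / 2 ^ i"
  proof -
    have "i \<le> T" unfolding T_def by simp
    then have "(\<Sum>i'\<in>{i..<T}. 1 / 2 ^ (i' + 1) :: real) \<le> 1 / 2 ^ i - 1 / 2 ^ T" by (rule geom_half)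
    moreover have "(0::real) \<le> 1 / 2 ^ T" by simp
    ultimately show ?thesis by linarith
  qed
  show ?thesis using eqQ b1 b2 b3 by linarith
qed

lemma DD_term_nonneg: "DD m * v (m + j) \<ge> 0"
proof (cases "m = 0")
  case True then show ?thesis using DD_0 by simp
next
  case False then show ?thesis using DD_nonneg[of m] vpos[of "m + j"] by auto
qed

lemma DD_summable: "summable (\<lambda>m. DD m * v (m + j))"
  using partial_bound[of j j] Pst_ge[of j] DD_term_nonneg by (intro summableI_nonneg_bounded) auto

lemma DD_suminf_le: "j \<le> Pst i \<Longrightarrow> (\<Sum>m. DD m * v (m + j)) \<le> Gs (prf i) (Bst i) j + 1 / 2 ^ i"
  using DD_summable partial_bound by (intro suminf_le_const) auto

definition "xx m = complex_of_real (DD m powr (1 / p))"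

lemma xx_pow: "cmod (xx m) powr p = DD m"
proof -
  have "cmod (xx m) = DD m powr (1 / p)" unfolding xx_def by simp
  then show ?thesis using DD_nonneg p0 by (simp add: powr_powr powr_one)
qed

lemma xx_lp: "xx \<in> lp_space p v"
proof -
  have "xx 0 = 0" unfolding xx_def using DD_0 by simp
  moreover have "summable (\<lambda>m. cmod (xx m) powr p * v m)" using DD_summable[of 0] by (simp add: xx_pow)
  ultimately show ?thesis unfolding lp_space_def by simp
qed

lemma phi_xx: "phi p v xx j = (\<Sum>m. DD m * v (m + j))"
  unfolding phi_def by (simp add: xx_pow)

lemma xx_small:
  assumes j: "j \<in> {1..Pst (Suc i)}" "Gs (prf (Suc i)) (Bst (Suc i)) j < 1 / real (i + 1)"
  shows "phi p v xx j \<le> 2 / real (i + 1)"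
proof -
  have "phi p v xx j \<le> Gs (prf (Suc i)) (Bst (Suc i)) j + 1 / 2 ^ Suc i"
    unfolding phi_xx using DD_suminf_le[of j "Suc i"] j by auto
  moreover have "1 / 2 ^ Suc i \<le> 1 / real (i + 1)"
  proof -
    have "real (i + 1) \<le> 2 ^ Suc i"
      by (metis Suc_eq_plus1 less_exp of_nat_le_iff of_nat_numeral of_nat_power less_imp_le_nat Suc_leI)
    then show ?thesis by (simp add: frac_le)
  qed
  ultimately show ?thesis using j by simp
qed

lemma xx_large:
  assumes u0: "u 0 = 0" and uU: "\<And>m. m > U \<Longrightarrow> u m = 0" and iU: "Bst i \<ge> U"
  shows "phi p v (\<lambda>m. u m + c * xx m) n \<ge> cmod c powr p * bs i n"
proof -
  have uY: "u \<in> lp_space p v" using lp_space_fin u0 uU by blast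
  have cx: "(\<lambda>m. c * xx m) \<in> lp_space p v" using lp_space_scale xx_lp by blast
  have zY: "(\<lambda>m. u m + c * xx m) \<in> lp_space p v" using lp_space_add[OF uY cx] by simp
  have "(\<Sum>m\<in>SP i. cmod (u m + c * xx m) powr p * v (m + n)) = (\<Sum>m\<in>SP i. cmod c powr p * (blk i m * v (m + n)))"
  proof (rule sum.cong)
    fix m assume m: "m \<in> SP i"
    then have "m > U" using SP_range[OF m] blk_good(2)[of i] iU by auto
    then have "u m = 0" by (rule uU)
    then show "cmod (u m + c * xx m) powr p * v (m + n) = cmod c powr p * (blk i m * v (m + n))"
      using DD_block[OF m] xx_pow[of m] DD_nonneg[of m] by (simp add: norm_mult powr_mult)
  qed simp
  also have "\<dots> = cmod c powr p * (\<Sum>m\<in>SP i. blk i m * v (m + n))" by (rule sum_distrib_left[symmetric])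
  also have "\<dots> = cmod c powr p * bs i n" using blk_sum_SP by simp
  finally show ?thesis using phi_ge_partial[OF zY SP_fin, of n i] by simp
qed

end


context cdata
begin

lemma irreg_large:
  assumes u0: "u 0 = 0" and uU: "\<And>m. m > U \<Longrightarrow> u m = 0" and c: "c \<noteq> 0" and th: "\<theta> > 0"
  shows "dens1 {j. phi p v (\<lambda>m. u m + c * xx m) j \<ge> \<theta>}"
  unfolding dens1_def
proof (intro allI impI)
  fix \<eta> :: real and N0 assume e: "\<eta> > 0"
  define cp where "cp = cmod c powr p"
  have cp: "cp > 0" using c unfolding cp_def by simp
  define i where "i = max (max U N0) (max (nat \<lceil>\<theta> / cp\<rceil>) (nat \<lceil>1 / \<eta>\<rceil>))"
  have iU: "Bst i \<ge> U" using Bst_ge[of i] unfolding i_def by auto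
  have i1: "real (i + 1) \<ge> \<theta> / cp" unfolding i_def by linarith
  have i2: "real (i + 2) \<ge> 1 / \<eta>" unfolding i_def by linarith
  have "i \<ge> N0" unfolding i_def by auto
  then have iN: "LL i \<ge> N0" "LL i > 0" using blk_good(3)[of i] by auto
  have "{n \<in> {1..LL i}. bs i n \<ge> real (i + 1)} \<subseteq> {j. phi p v (\<lambda>m. u m + c * xx m) j \<ge> \<theta>} \<inter> {1..LL i}"
  proof safe
    fix n assume n: "real (i + 1) \<le> bs i n"
    have "\<theta> \<le> cp * real (i + 1)" using i1 cp by (auto simp: field_simps)
    also have "\<dots> \<le> cp * bs i n" using n cp by (intro mult_left_mono) auto
    also have "\<dots> \<le> phi p v (\<lambda>m. u m + c * xx m) n" unfolding cp_def using xx_large[where u=u and U=U and i=i and c=c and n=n, OF u0 uU iU] by blast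
    finally show "\<theta> \<le> phi p v (\<lambda>m. u m + c * xx m) n" .
  qed
  then have "card {n \<in> {1..LL i}. bs i n \<ge> real (i + 1)} \<le> card ({j. phi p v (\<lambda>m. u m + c * xx m) j \<ge> \<theta>} \<inter> {1..LL i})"
    by (intro card_mono) auto
  moreover have "(1 - 1 / real (i + 2)) * real (LL i) \<ge> (1 - \<eta>) * real (LL i)"
  proof (intro mult_right_mono)
    show "1 - \<eta> \<le> 1 - 1 / real (i + 2)" using i2 e by (auto simp: field_simps)
  qed simp
  ultimately have "real (card ({j. phi p v (\<lambda>m. u m + c * xx m) j \<ge> \<theta>} \<inter> {1..LL i})) \<ge> (1 - \<eta>) * real (LL i)"
    using bs_large[of i] by linarith
  then show "\<exists>N\<ge>N0. N > 0 \<and> real (card ({j. phi p v (\<lambda>m. u m + c * xx m) j \<ge> \<theta>} \<inter> {1..N})) \<ge> (1 - \<eta>) * real N"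
    using iN by (intro exI[of _ "LL i"]) auto
qed

lemma irreg_small:
  assumes u0: "u 0 = 0" and uU: "\<And>m. m > U \<Longrightarrow> u m = 0" and c: "c \<noteq> 0" and d: "\<delta> > 0"
  shows "dens1 {j. phi p v (\<lambda>m. u m + c * xx m) j < \<delta>}"
  unfolding dens1_def
proof (intro allI impI)
  fix \<eta> :: real and N0 assume e: "\<eta> > 0"
  define cp where "cp = cmod c powr p"
  have cp: "cp > 0" using c unfolding cp_def by simp
  define cu where "cu = (\<Sum>m\<in>{1..U}. cmod (u m) powr p * M ^ m)"
  have cu: "cu \<ge> 0" unfolding cu_def using M1 by (intro sum_nonneg) auto
  define ee where "ee = \<delta> / (2 * 2 powr p * (cu + 1))"
  have ee: "ee > 0" using d cu unfolding ee_def by auto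
  obtain nu where nu: "\<And>n. n \<in> A \<Longrightarrow> n \<ge> nu \<Longrightarrow> v n < ee" using A(3)[OF ee] by blast
  have uY: "u \<in> lp_space p v" using lp_space_fin u0 uU by blast
  have cx: "(\<lambda>m. c * xx m) \<in> lp_space p v" using lp_space_scale xx_lp by blast
  define i where "i = max (max N0 (nat \<lceil>4 * 2 powr p * cp / \<delta>\<rceil>)) (max (nat \<lceil>2 / \<eta>\<rceil>) (nat \<lceil>2 * real nu / \<eta>\<rceil>))"
  have i1: "real (i + 1) \<ge> 4 * 2 powr p * cp / \<delta>" unfolding i_def by linarith
  have i2: "real (i + 1) \<ge> 2 / \<eta>" unfolding i_def by linarith
  have i3: "real (i + 1) \<ge> 2 * real nu / \<eta>" unfolding i_def by linarith
  define P where "P = Pst (Suc i)"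
  have "i \<ge> N0" unfolding i_def by auto
  then have PN: "P \<ge> N0" "P > 0" "P \<ge> i + 1" using Pst_Suc(2)[of i] unfolding P_def by auto
  define X where "X = {j. j \<in> A \<and> Gs (prf (Suc i)) (Bst (Suc i)) j < 1 / real (i + 1)}"
  have cX: "real (card (X \<inter> {1..P})) \<ge> (1 - 1 / real (i + 1)) * real P"
  proof -
    have "X \<inter> {1..P} = {j \<in> {1..P}. j \<in> A \<and> Gs (prf (Suc i)) (Bst (Suc i)) j < 1 / real (i + 1)}"
      unfolding X_def by auto
    then show ?thesis using Pst_good[of i] unfolding goodP_def P_def by simp
  qed
  have sub: "{n \<in> X. n \<ge> max nu 1} \<inter> {1..P} \<subseteq> {j. phi p v (\<lambda>m. u m + c * xx m) j < \<delta>} \<inter> {1..P}"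
  proof (intro subsetI)
    fix j assume jj: "j \<in> {n \<in> X. n \<ge> max nu 1} \<inter> {1..P}"
    then have j: "j \<in> X" "max nu 1 \<le> j" "j \<le> P" by auto
    have j1: "j \<ge> 1" using j by auto
    have "phi p v xx j \<le> 2 / real (i + 1)" using xx_small[of j i] j unfolding X_def P_def by auto
    then have px: "cp * phi p v xx j \<le> cp * (2 / real (i + 1))" using cp by (intro mult_left_mono) auto
    have "cp * (2 / real (i + 1)) \<le> \<delta> / (4 * 2 powr p) * 2"
    proof -
      have "cp / real (i + 1) \<le> \<delta> / (4 * 2 powr p)" using i1 cp d by (auto simp: field_simps)
      then show ?thesis by (simp add: field_simps)
    qed
    then have "cp * phi p v xx j \<le> \<delta> / (4 * 2 powr p) * 2" using px by linarith
    then have "2 powr p * (cp * phi p v xx j) \<le> 2 powr p * (\<delta> / (4 * 2 powr p) * 2)" by (intro mult_left_mono) auto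
    also have "\<dots> = \<delta> / 2" by (simp add: field_simps)
    finally have px2: "2 powr p * (cp * phi p v xx j) \<le> \<delta> / 2" .
    have "phi p v u j \<le> cu * v j" using phi_fin_bound[where u=u and U=U and j=j, OF u0 uU j1] unfolding cu_def .
    also have "\<dots> \<le> cu * ee" using nu[of j] j cu unfolding X_def by (intro mult_left_mono) auto
    also have "\<dots> < \<delta> / (2 * 2 powr p)"
    proof -
      have "cu * ee = \<delta> / (2 * 2 powr p) * (cu / (cu + 1))" unfolding ee_def using cu by (simp add: field_simps)
      also have "\<dots> < \<delta> / (2 * 2 powr p) * 1" using cu d by (intro mult_strict_left_mono) auto
      finally show ?thesis by simp
    qed
    finally have pu: "2 powr p * phi p v u j < \<delta> / 2" by (simp add: field_simps)
    have eq: "phi p v (\<lambda>m. c * xx m) j = cp * phi p v xx j" unfolding cp_def using phi_scale[OF xx_lp] .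
    have "phi p v (\<lambda>m. u m + c * xx m) j \<le> 2 powr p * (phi p v u j + phi p v (\<lambda>m. c * xx m) j)"
      using phi_add_le[OF uY cx] by simp
    then have "phi p v (\<lambda>m. u m + c * xx m) j \<le> 2 powr p * phi p v u j + 2 powr p * (cp * phi p v xx j)"
      using eq by (simp add: algebra_simps)
    then have "phi p v (\<lambda>m. u m + c * xx m) j < \<delta>" using pu px2 by linarith
    then show "j \<in> {j. phi p v (\<lambda>m. u m + c * xx m) j < \<delta>} \<inter> {1..P}" using jj by auto
  qed
  have f1: "real (card ({n \<in> X. n \<ge> max nu 1} \<inter> {1..P})) \<ge> real (card (X \<inter> {1..P})) - real (max nu 1)"
    by (rule card_tail)
  have "card ({n \<in> X. n \<ge> max nu 1} \<inter> {1..P}) \<le> card ({j. phi p v (\<lambda>m. u m + c * xx m) j < \<delta>} \<inter> {1..P})"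
    using sub by (intro card_mono) auto
  then have f2: "real (card ({n \<in> X. n \<ge> max nu 1} \<inter> {1..P})) \<le> real (card ({j. phi p v (\<lambda>m. u m + c * xx m) j < \<delta>} \<inter> {1..P}))"
    by linarith
  have f3: "real (max nu 1) \<le> \<eta> / 2 * real P"
  proof -
    have "real nu \<le> \<eta> / 2 * real (i + 1)" using i3 e by (auto simp: field_simps)
    moreover have "1 \<le> \<eta> / 2 * real (i + 1)" using i2 e by (auto simp: field_simps)
    moreover have "\<eta> / 2 * real (i + 1) \<le> \<eta> / 2 * real P" using PN e by (intro mult_left_mono) auto
    ultimately show ?thesis by auto
  qed
  have f4: "1 / real (i + 1) * real P \<le> \<eta> / 2 * real P"
    using i2 e by (intro mult_right_mono) (auto simp: field_simps)
  have f5: "(1 - 1 / real (i + 1)) * real P = real P - 1 / real (i + 1) * real P" by (simp add: algebra_simps)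
  have f6: "(1 - \<eta>) * real P = real P - \<eta> / 2 * real P - \<eta> / 2 * real P" by (simp add: algebra_simps)
  have "real (card ({j. phi p v (\<lambda>m. u m + c * xx m) j < \<delta>} \<inter> {1..P})) \<ge> (1 - \<eta>) * real P"
  proof -
    define a where "a = real (card ({j. phi p v (\<lambda>m. u m + c * xx m) j < \<delta>} \<inter> {1..P}))"
    define b where "b = real (card ({n \<in> X. n \<ge> max nu 1} \<inter> {1..P}))"
    define cc where "cc = real (card (X \<inter> {1..P}))"
    define q where "q = 1 / real (i + 1) * real P"
    define r where "r = \<eta> / 2 * real P"
    have "cc \<ge> real P - q" using cX f5 unfolding cc_def q_def by simp
    moreover have "b \<ge> cc - real (max nu 1)" using f1 unfolding b_def cc_def .
    moreover have "a \<ge> b" using f2 unfolding a_def b_def .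
    moreover have "real (max nu 1) \<le> r" using f3 unfolding r_def .
    moreover have "q \<le> r" using f4 unfolding q_def r_def .
    moreover have "(1 - \<eta>) * real P = real P - r - r" using f6 unfolding r_def .
    ultimately show ?thesis unfolding a_def[symmetric] by linarith
  qed
  then show "\<exists>N\<ge>N0. N > 0 \<and> real (card ({j. phi p v (\<lambda>m. u m + c * xx m) j < \<delta>} \<inter> {1..N})) \<ge> (1 - \<eta>) * real N"
    using PN by (intro exI[of _ P]) auto
qed

end


definition emb :: "(rat \<times> rat) list \<Rightarrow> nat \<Rightarrow> complex" where
  "emb l m = (if 1 \<le> m \<and> m \<le> length l then Complex (of_rat (fst (l ! (m - 1)))) (of_rat (snd (l ! (m - 1)))) else 0)"

lemma emb_0: "emb l 0 = 0" by (simp add: emb_def)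
lemma emb_supp: "m > length l \<Longrightarrow> emb l m = 0" by (simp add: emb_def)

lemma rat_approx: "r > 0 \<Longrightarrow> \<exists>q :: rat \<times> rat. cmod (w - Complex (of_rat (fst q)) (of_rat (snd q))) < r"
proof -
  assume r: "r > 0"
  obtain a where a: "a \<in> \<rat>" "Re w - r / 2 < a" "a < Re w + r / 2" using Rats_dense_in_real[of "Re w - r / 2" "Re w + r / 2"] r by auto
  obtain b where b: "b \<in> \<rat>" "Im w - r / 2 < b" "b < Im w + r / 2" using Rats_dense_in_real[of "Im w - r / 2" "Im w + r / 2"] r by auto
  obtain qa where qa: "a = of_rat qa" using a(1) by (auto elim: Rats_cases)
  obtain qb where qb: "b = of_rat qb" using b(1) by (auto elim: Rats_cases)
  have "cmod (w - Complex a b) \<le> \<bar>Re (w - Complex a b)\<bar> + \<bar>Im (w - Complex a b)\<bar>" by (rule cmod_le)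
  also have "\<dots> < r" using a b by auto
  finally show ?thesis using qa qb by (intro exI[of _ "(qa, qb)"]) auto
qed

context wsetup
begin

lemma emb_lp: "emb l \<in> lp_space p v"
  using lp_space_fin[of "emb l" "length l"] emb_0 emb_supp by blast

lemma dense_emb:
  assumes y: "y \<in> lp_space p v" and e: "e > 0"
  shows "\<exists>l. phi p v (y - emb l) 0 < e"
proof -
  have y0: "y 0 = 0" using y by (simp add: lp_space_def)
  define f where "f m = cmod (y m) powr p * v m" for m
  have sf: "summable f" using y unfolding f_def lp_space_def by simp
  obtain U where U: "\<And>n. n \<ge> U \<Longrightarrow> norm (\<Sum>i. f (i + n)) < e / 2" using suminf_exist_split[of "e / 2" f] e sf by auto
  have "\<forall>m. \<exists>q :: rat \<times> rat. m \<in> {1..U} \<longrightarrow> cmod (y m - Complex (of_rat (fst q)) (of_rat (snd q))) powr p * v m < e / (2 * real (U + 1))"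
  proof (intro allI)
    fix m
    show "\<exists>q :: rat \<times> rat. m \<in> {1..U} \<longrightarrow> cmod (y m - Complex (of_rat (fst q)) (of_rat (snd q))) powr p * v m < e / (2 * real (U + 1))"
    proof (cases "m \<in> {1..U}")
      case True
      then have vm: "v m > 0" using vpos by auto
      define r where "r = (e / (2 * real (U + 1) * v m)) powr (1 / p)"
      have r: "r > 0" unfolding r_def using e vm by auto
      obtain q :: "rat \<times> rat" where q: "cmod (y m - Complex (of_rat (fst q)) (of_rat (snd q))) < r" using rat_approx[OF r] by blast
      have "cmod (y m - Complex (of_rat (fst q)) (of_rat (snd q))) powr p < r powr p"
        using q p0 by (intro powr_less_mono2) auto
      also have "r powr p = e / (2 * real (U + 1) * v m)" unfolding r_def using e vm p0 by (simp add: powr_powr)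
      finally have "cmod (y m - Complex (of_rat (fst q)) (of_rat (snd q))) powr p * v m < e / (2 * real (U + 1) * v m) * v m"
        using vm by (intro mult_strict_right_mono) auto
      also have "\<dots> = e / (2 * real (U + 1))" using vm by simp
      finally show ?thesis by blast
    qed auto
  qed
  then obtain g :: "nat \<Rightarrow> rat \<times> rat" where g: "\<And>m. m \<in> {1..U} \<Longrightarrow> cmod (y m - Complex (of_rat (fst (g m))) (of_rat (snd (g m)))) powr p * v m < e / (2 * real (U + 1))"
    by metis
  define l where "l = map g [1..<U+1]"
  have ll: "length l = U" unfolding l_def by simp
  have embl: "emb l m = Complex (of_rat (fst (g m))) (of_rat (snd (g m)))" if "m \<in> {1..U}" for m
  proof -
    have m: "m - 1 < length [1..<U+1]" using that by auto
    have "[1..<U+1] ! (m - 1) = m" using that by (subst nth_upt) auto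
    then have "l ! (m - 1) = g m" unfolding l_def using nth_map[OF m, of g] by simp
    then show ?thesis using that ll unfolding emb_def by auto
  qed
  define h where "h m = cmod ((y - emb l) m) powr p * v m" for m
  have yl: "y - emb l \<in> lp_space p v" using lp_space_diff[OF y emb_lp] .
  have sh: "summable h" using yl unfolding h_def lp_space_def by simp
  have "phi p v (y - emb l) 0 = (\<Sum>m. h m)" unfolding phi_def h_def by simp
  also have "\<dots> = (\<Sum>m. h (m + (U + 1))) + (\<Sum>m<U + 1. h m)" by (rule suminf_split_initial_segment[OF sh])
  also have "(\<Sum>m. h (m + (U + 1))) = (\<Sum>m. f (m + (U + 1)))"
    unfolding h_def f_def using emb_supp[of l] ll by simp
  finally have eq1: "phi p v (y - emb l) 0 = (\<Sum>m. f (m + (U + 1))) + (\<Sum>m<U + 1. h m)" .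
  have "(\<Sum>m<U + 1. h m) \<le> (\<Sum>m<U + 1. e / (2 * real (U + 1)))"
  proof (rule sum_mono)
    fix m assume "m \<in> {..<U + 1}"
    then show "h m \<le> e / (2 * real (U + 1))"
    proof (cases "m = 0")
      case True then show ?thesis using y0 emb_0 e unfolding h_def by simp
    next
      case False
      then have "m \<in> {1..U}" using \<open>m \<in> {..<U + 1}\<close> by auto
      then show ?thesis using g[of m] embl[of m] unfolding h_def by (simp add: less_imp_le)
    qed
  qed
  also have "(\<Sum>m<U + 1. e / (2 * real (U + 1))) = e / 2"
  proof -
    have "(\<Sum>m<U + 1. e / (2 * real (U + 1))) = real (U + 1) * (e / (2 * real (U + 1)))" by simp
    also have "\<dots> = e / 2" by (simp add: field_simps)
    finally show ?thesis .
  qed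
  finally have "phi p v (y - emb l) 0 \<le> (\<Sum>m. f (m + (U + 1))) + e / 2" using eq1 by linarith
  moreover have "(\<Sum>m. f (m + (U + 1))) < e / 2" using U[of "U + 1"] by auto
  ultimately have "phi p v (y - emb l) 0 < e" by linarith
  then show ?thesis by blast
qed

end


context cdata
begin

definition "Dq q = emb (from_nat (fst (prod_decode q)))"
definition "tq q = 1 / real (q + 2)"
definition "Gam = (\<lambda>t. \<lambda>m. complex_of_real t * xx m) ` {1<..<2} \<union> range (\<lambda>q. \<lambda>m. Dq q m + complex_of_real (tq q) * xx m)"

lemma Dq_0: "Dq q 0 = 0" unfolding Dq_def by (rule emb_0)
lemma Dq_supp: "\<exists>U. \<forall>m>U. Dq q m = 0" unfolding Dq_def using emb_supp by blast
lemma Dq_lp: "Dq q \<in> lp_space p v" unfolding Dq_def by (rule emb_lp)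

lemma tq_inj: "tq q1 = tq q2 \<Longrightarrow> q1 = q2" unfolding tq_def by auto
lemma tq_lt1: "tq q < 1" unfolding tq_def by auto

lemma xx_nonzero: "\<exists>m. xx m \<noteq> 0"
proof (rule ccontr)
  assume "\<not> (\<exists>m. xx m \<noteq> 0)"
  then have z: "\<And>m. xx m = 0" by auto
  have "dens1 {j. phi p v (\<lambda>m. 0 + 1 * xx m) j \<ge> 1}"
    by (rule irreg_large[of "\<lambda>m. 0" 0]) auto
  then obtain j where "phi p v (\<lambda>m. 0 + 1 * xx m) j \<ge> 1" using dens1_nonempty by blast
  moreover have "phi p v (\<lambda>m. 0 + 1 * xx m) j = 0" unfolding phi_def using z by simp
  ultimately show False by simp
qed

lemma Gam_lp: "Gam \<subseteq> lp_space p v"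
proof
  fix g assume "g \<in> Gam"
  then consider (a) t where "g = (\<lambda>m. complex_of_real t * xx m)" | (b) q where "g = (\<lambda>m. Dq q m + complex_of_real (tq q) * xx m)"
    unfolding Gam_def by auto
  then show "g \<in> lp_space p v"
  proof cases
    case a then show ?thesis using lp_space_scale[OF xx_lp] by simp
  next
    case b then show ?thesis using lp_space_add[OF Dq_lp lp_space_scale[OF xx_lp]] by simp
  qed
qed

lemma diff_form:
  assumes g1: "g1 \<in> Gam" and g2: "g2 \<in> Gam" and ne: "g1 \<noteq> g2"
  shows "\<exists>u U c. u 0 = 0 \<and> (\<forall>m>U. u m = 0) \<and> c \<noteq> 0 \<and> g1 - g2 = (\<lambda>m. u m + c * xx m)"
proof -
  have form: "\<exists>d t. g = (\<lambda>m. d m + complex_of_real t * xx m) \<and> d 0 = 0 \<and> (\<exists>U. \<forall>m>U. d m = 0) \<and>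
      ((d = (\<lambda>m. 0) \<and> t \<in> {1<..<2}) \<or> (\<exists>q. d = Dq q \<and> t = tq q))" if "g \<in> Gam" for g
  proof -
    from that consider (a) t where "t \<in> {1<..<2}" "g = (\<lambda>m. complex_of_real t * xx m)"
      | (b) q where "g = (\<lambda>m. Dq q m + complex_of_real (tq q) * xx m)"
      unfolding Gam_def by auto
    then show ?thesis
    proof cases
      case a
      then show ?thesis by (intro exI[of _ "\<lambda>m. 0"] exI[of _ t]) auto
    next
      case b
      then show ?thesis using Dq_0[of q] Dq_supp[of q] by (intro exI[of _ "Dq q"] exI[of _ "tq q"]) auto
    qed
  qed
  from form[OF g1] obtain d1 t1 where h1a: "g1 = (\<lambda>m. d1 m + complex_of_real t1 * xx m) \<and> d1 0 = 0 \<and> (\<exists>U. \<forall>m>U. d1 m = 0) \<and>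
    ((d1 = (\<lambda>m. 0) \<and> t1 \<in> {1<..<2}) \<or> (\<exists>q. d1 = Dq q \<and> t1 = tq q))" by (elim exE) (erule that)
  from form[OF g2] obtain d2 t2 where h2a: "g2 = (\<lambda>m. d2 m + complex_of_real t2 * xx m) \<and> d2 0 = 0 \<and> (\<exists>U. \<forall>m>U. d2 m = 0) \<and>
    ((d2 = (\<lambda>m. 0) \<and> t2 \<in> {1<..<2}) \<or> (\<exists>q. d2 = Dq q \<and> t2 = tq q))" by (elim exE) (erule that)
  have h1: "g1 = (\<lambda>m. d1 m + complex_of_real t1 * xx m)" "d1 0 = 0" "\<exists>U. \<forall>m>U. d1 m = 0"
    "(d1 = (\<lambda>m. 0) \<and> t1 \<in> {1<..<2}) \<or> (\<exists>q. d1 = Dq q \<and> t1 = tq q)" using h1a by auto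
  have h2: "g2 = (\<lambda>m. d2 m + complex_of_real t2 * xx m)" "d2 0 = 0" "\<exists>U. \<forall>m>U. d2 m = 0"
    "(d2 = (\<lambda>m. 0) \<and> t2 \<in> {1<..<2}) \<or> (\<exists>q. d2 = Dq q \<and> t2 = tq q)" using h2a by auto
  have t: "t1 \<noteq> t2"
  proof
    assume tt: "t1 = t2"
    have "d1 = d2"
      using h1(4) h2(4) tt tq_inj tq_lt1 by (metis greaterThanLessThan_iff less_asym)
    then show False using ne h1(1) h2(1) tt by simp
  qed
  obtain U1 where U1: "\<forall>m>U1. d1 m = 0" using h1(3) by blast
  obtain U2 where U2: "\<forall>m>U2. d2 m = 0" using h2(3) by blast
  show ?thesis
  proof (intro exI conjI)
    show "(\<lambda>m. d1 m - d2 m) 0 = 0" using h1(2) h2(2) by simp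
    show "\<forall>m>max U1 U2. (\<lambda>m. d1 m - d2 m) m = 0" using U1 U2 by auto
    show "complex_of_real (t1 - t2) \<noteq> 0" using t by simp
    show "g1 - g2 = (\<lambda>m. (\<lambda>m. d1 m - d2 m) m + complex_of_real (t1 - t2) * xx m)"
      using h1(1) h2(1) by (auto simp: fun_eq_iff algebra_simps)
  qed
qed

lemma Gam_unc: "uncountable Gam"
proof
  assume c: "countable Gam"
  obtain m0 where m0: "xx m0 \<noteq> 0" using xx_nonzero by blast
  have inj: "inj_on (\<lambda>t. \<lambda>m. complex_of_real t * xx m) {1<..<2}"
  proof (rule inj_onI)
    fix s t assume "(\<lambda>m. complex_of_real s * xx m) = (\<lambda>m. complex_of_real t * xx m)"
    then have "complex_of_real s * xx m0 = complex_of_real t * xx m0" by metis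
    then show "s = t" using m0 by simp
  qed
  have "countable ((\<lambda>t. \<lambda>m. complex_of_real t * xx m) ` {1<..<2::real})"
    using c unfolding Gam_def by (rule countable_subset[rotated]) auto
  then have "countable {1<..<2::real}" using inj by (rule countable_image_inj_on)
  then show False using uncountable_open_interval[of 1 2] by simp
qed

lemma c_imp_dense_dc: "densely_distr_chaotic (lp_space p v) fwd_shift (lp_norm p v)"
  unfolding densely_distr_chaotic_def
proof (intro exI conjI)
  show "Gam \<subseteq> lp_space p v" by (rule Gam_lp)
  show "dc_set fwd_shift (lp_norm p v) Gam 1"
    unfolding dc_set_def
  proof (intro conjI allI impI ballI)
    show "uncountable Gam" by (rule Gam_unc)
    show "(1::real) > 0" by simp
    fix \<delta> :: real and g1 g2 assume d: "\<delta> > 0" and g1: "g1 \<in> Gam" and g2: "g2 \<in> Gam" and ne: "g1 \<noteq> g2"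
    obtain u U c where uc: "u 0 = 0" "\<forall>m>U. u m = 0" "c \<noteq> 0" "g1 - g2 = (\<lambda>m. u m + c * xx m)"
      using diff_form[OF g1 g2 ne] by blast
    have g1Y: "g1 \<in> lp_space p v" and g2Y: "g2 \<in> lp_space p v" using g1 g2 Gam_lp by auto
    have seteq: "{j. lp_norm p v ((fwd_shift ^^ j) g1 - (fwd_shift ^^ j) g2) < r} = {j. phi p v (\<lambda>m. u m + c * xx m) j < r powr p}"
      if "r > 0" for r
      using norm_orbit_diff[OF g1Y g2Y that] uc(4) by auto
    have "dens1 {j. phi p v (\<lambda>m. u m + c * xx m) j < \<delta> powr p}"
      using irreg_small[of u U c "\<delta> powr p"] uc d by auto
    then show "upper_dens {j. lp_norm p v ((fwd_shift ^^ j) g1 - (fwd_shift ^^ j) g2) < \<delta>} = 1"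
      using seteq[OF d] dens1_imp_upper_dens by simp
    have "dens1 {j. phi p v (\<lambda>m. u m + c * xx m) j \<ge> 1}"
      using irreg_large[of u U c 1] uc by auto
    then have "dens0 {j. phi p v (\<lambda>m. u m + c * xx m) j < 1}"
      by (rule dens1_disjoint_imp_dens0) auto
    then show "lower_dens {j. lp_norm p v ((fwd_shift ^^ j) g1 - (fwd_shift ^^ j) g2) < 1} = 0"
      using seteq[of 1] dens0_imp_lower_dens by simp
  qed
  show "\<forall>y\<in>lp_space p v. \<forall>e>0. \<exists>g\<in>Gam. lp_norm p v (y - g) < e"
  proof (intro ballI allI impI)
    fix y e assume y: "y \<in> lp_space p v" and e: "(e::real) > 0"
    define E where "E = e powr p"
    have E: "E > 0" using e unfolding E_def by simp
    define H where "H = 2 powr p"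
    have H: "H > 0" unfolding H_def by simp
    obtain l where l: "phi p v (y - emb l) 0 < E / (2 * H)" using dense_emb[OF y, of "E / (2 * H)"] E H by auto
    define \<phi>0 where "\<phi>0 = phi p v xx 0"
    have \<phi>0: "\<phi>0 \<ge> 0" unfolding \<phi>0_def by (rule phi_nonneg[OF xx_lp])
    define \<rho> where "\<rho> = (E / (2 * H * (\<phi>0 + 1))) powr (1 / p)"
    have \<rho>: "\<rho> > 0" unfolding \<rho>_def using E H \<phi>0 by auto
    obtain r where r: "inverse (real (Suc r)) < \<rho>" using reals_Archimedean[OF \<rho>] by blast
    define q where "q = prod_encode (to_nat l, r)"
    have Dql: "Dq q = emb l" unfolding Dq_def q_def by simp
    have qr: "q \<ge> r" unfolding q_def by (rule le_prod_encode_2)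
    have tq_le: "tq q \<le> \<rho>"
    proof -
      have "tq q \<le> inverse (real (Suc r))" unfolding tq_def using qr by (simp add: inverse_eq_divide frac_le)
      then show ?thesis using r by simp
    qed
    have tq_pos: "tq q > 0" unfolding tq_def by simp
    define g where "g = (\<lambda>m. Dq q m + complex_of_real (tq q) * xx m)"
    have gG: "g \<in> Gam" unfolding Gam_def g_def by auto
    have gY: "g \<in> lp_space p v" using gG Gam_lp by auto
    have yl: "y - emb l \<in> lp_space p v" using lp_space_diff[OF y emb_lp] .
    have cx: "(\<lambda>m. (- complex_of_real (tq q)) * xx m) \<in> lp_space p v" using lp_space_scale[OF xx_lp] .
    have eqf: "y - g = (\<lambda>m. (y - emb l) m + (- complex_of_real (tq q)) * xx m)"
      unfolding g_def Dql by (auto simp: fun_eq_iff)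
    have "phi p v (y - g) 0 \<le> 2 powr p * (phi p v (y - emb l) 0 + phi p v (\<lambda>m. (- complex_of_real (tq q)) * xx m) 0)"
      unfolding eqf by (rule phi_add_le[OF yl cx])
    moreover have "phi p v (\<lambda>m. (- complex_of_real (tq q)) * xx m) 0 = tq q powr p * \<phi>0"
    proof -
      have "phi p v (\<lambda>m. (- complex_of_real (tq q)) * xx m) 0 = cmod (- complex_of_real (tq q)) powr p * phi p v xx 0"
        by (rule phi_scale[OF xx_lp])
      moreover have "cmod (- complex_of_real (tq q)) = tq q" using tq_pos by simp
      ultimately show ?thesis unfolding \<phi>0_def by simp
    qed
    moreover have "tq q powr p * \<phi>0 < E / (2 * H)"
    proof -
      have "tq q powr p \<le> \<rho> powr p" using tq_le tq_pos p0 by (intro powr_mono2) auto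
      also have "\<rho> powr p = E / (2 * H * (\<phi>0 + 1))" unfolding \<rho>_def using E H \<phi>0 p0 by (simp add: powr_powr)
      finally have "tq q powr p * \<phi>0 \<le> E / (2 * H * (\<phi>0 + 1)) * \<phi>0" using \<phi>0 by (intro mult_right_mono) auto
      also have "\<dots> = E / (2 * H) * (\<phi>0 / (\<phi>0 + 1))" using \<phi>0 by (simp add: field_simps)
      also have "\<dots> < E / (2 * H) * 1" using \<phi>0 E H by (intro mult_strict_left_mono) auto
      finally show ?thesis by simp
    qed
    ultimately have "phi p v (y - g) 0 < H * (E / (2 * H) + E / (2 * H))"
      using l H unfolding H_def by (smt (verit) mult_strict_left_mono)
    also have "\<dots> = E" using H by (simp add: field_simps)
    finally have "phi p v (y - g) 0 < e powr p" unfolding E_def .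
    then have "lp_norm p v (y - g) < e" using norm_diff[OF y gY e] by simp
    then show "\<exists>g\<in>Gam. lp_norm p v (y - g) < e" using gG by blast
  qed
qed

end


theorem mainTheorem12:
  fixes p :: real and v :: "nat \<Rightarrow> real"
  assumes "1 \<le> p"
    and "\<And>n. n \<ge> 1 \<Longrightarrow> v n > 0"
    and "\<exists>M. \<forall>n\<ge>1. v (n + 1) / v n \<le> M"
  shows "(distr_chaotic (lp_space p v) fwd_shift (lp_norm p v)
            \<longleftrightarrow> densely_distr_chaotic (lp_space p v) fwd_shift (lp_norm p v))
       \<and> (distr_chaotic (lp_space p v) fwd_shift (lp_norm p v)
            \<longleftrightarrow> (\<exists>S :: nat \<Rightarrow> nat set.
                  (\<forall>k\<ge>1. finite (S k) \<and> S k \<noteq> {} \<and> S k \<subseteq> {1..})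
                \<and> (\<exists>A. A \<subseteq> {1..} \<and> upper_dens A = 1 \<and>
                     (\<forall>e>0. \<exists>n0. \<forall>n\<in>A. n \<ge> n0 \<longrightarrow> v n < e))
                \<and> (\<exists>\<epsilon>>0. \<exists>N :: nat \<Rightarrow> nat. \<exists>C :: nat \<Rightarrow> nat \<Rightarrow> complex.
                     N 1 \<ge> 1 \<and> (\<forall>k\<ge>1. N k < N (k + 1))
                   \<and> (\<forall>k\<ge>1. \<forall>j\<in>S k. C k j \<noteq> 0)
                   \<and> (\<forall>k\<ge>1. real (card {n \<in> {1..N k}.
                          (\<Sum>j\<in>S k. cmod (C k j) * v (n + j)) / (\<Sum>j\<in>S k. cmod (C k j) * v j)
                            \<ge> real k}) \<ge> real (N k) * \<epsilon>))))"
proof -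
  obtain M0 where M0: "\<forall>n\<ge>1. v (n + 1) / v n \<le> M0" using assms(3) by blast
  define M where "M = max M0 1"
  interpret W: wsetup p v M
  proof
    show "1 \<le> p" by (rule assms(1))
    show "\<And>n. n \<ge> 1 \<Longrightarrow> v n > 0" by (rule assms(2))
    show "M \<ge> 1" unfolding M_def by simp
    fix n :: nat assume n: "n \<ge> 1"
    have vn: "v n > 0" using assms(2) n by auto
    have "v (n + 1) / v n \<le> M" using M0 n unfolding M_def by force
    then show "v (n + 1) \<le> M * v n" using vn by (simp add: divide_le_eq)
  qed
  have ac: "condC p v" if "distr_chaotic (lp_space p v) fwd_shift (lp_norm p v)"
    using W.a_imp_c[OF that] .
  have cb: "densely_distr_chaotic (lp_space p v) fwd_shift (lp_norm p v)" if c: "condC p v"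
  proof -
    from c obtain S A \<epsilon> N C where
      S: "\<forall>k\<ge>1. finite (S k) \<and> S k \<noteq> {} \<and> S k \<subseteq> {1..}"
      and A: "A \<subseteq> {1..}" "upper_dens A = 1" "\<forall>e>0. \<exists>n0. \<forall>n\<in>A. n \<ge> n0 \<longrightarrow> v n < e"
      and e: "\<epsilon> > 0" and N: "N 1 \<ge> 1" "\<forall>k\<ge>1. N k < N (k + 1)"
      and C: "\<forall>k\<ge>1. \<forall>j\<in>S k. C k j \<noteq> 0"
      and B: "\<forall>k\<ge>1. real (card {n \<in> {1..N k}.
                          (\<Sum>j\<in>S k. cmod (C k j) * v (n + j)) / (\<Sum>j\<in>S k. cmod (C k j) * v j)
                            \<ge> real k}) \<ge> real (N k) * \<epsilon>"
      unfolding condC_def by blast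
    interpret CD: cdata p v M S A \<epsilon> N C
      by (unfold_locales) (use S A e N C B in auto)
    show ?thesis by (rule CD.c_imp_dense_dc)
  qed
  have ba: "distr_chaotic (lp_space p v) fwd_shift (lp_norm p v)" if "densely_distr_chaotic (lp_space p v) fwd_shift (lp_norm p v)"
    using that unfolding distr_chaotic_def densely_distr_chaotic_def by blast
  have "(distr_chaotic (lp_space p v) fwd_shift (lp_norm p v)
            \<longleftrightarrow> densely_distr_chaotic (lp_space p v) fwd_shift (lp_norm p v))
       \<and> (distr_chaotic (lp_space p v) fwd_shift (lp_norm p v) \<longleftrightarrow> condC p v)"
    using ac cb ba by blast
  then show ?thesis unfolding condC_def .
qed


end
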